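(* Let $\gamma\in[0,1)$ be such that the counting hypothesis $\mathrm{H}(\gamma)$ below holds. Then for every $\varepsilon>0$ there exist $b\in(0,\frac12)$ and a constant $C$ such that for all $u,v\in X_{0,b}$ \[ \|Q(u,v)\|_{L^2_tH^{-\frac\gamma2-\varepsilon}}\le C\|u\|_{X_{0,b}}\|v\|_{X_{0,b}}. \]
   Context: $\mathbb T^2=(\mathbb R/2\pi\mathbb Z)^2$; functions are spatially periodic functions of $(x,y,t)\in\mathbb T^2\times\mathbb R$, spatial frequencies are $(\xi,\eta)\in\mathbb Z^2$, and $\widehat f(\xi,\eta,\tau)$ is the Fourier transform in all variables. Let $\varphi(\xi,\eta)=\xi^3-3\xi\eta^2$, $\langle x\rangle=(1+|x|^2)^{1/2}$, and let $X_{s,b}$ be the periodic Bourgain space with norm $\|f\|_{X_{s,b}}^2=\int_{\mathbb R}\sum_{(\xi,\eta)\in\mathbb Z^2}\langle\tau-\varphi(\xi,\eta)\rangle^{2b}\langle(\xi,\eta)\rangle^{2s}|\widehat f(\xi,\eta,\tau)|^2d\tau$. $L^2_tH^{\sigma}$ is the norm $\big(\int_{\mathbb R}\|f(t)\|^2_{H^\sigma(\mathbb T^2)}dt\big)^{1/2}$. The bilinear operator $Q$ is defined by \[ \widehat{Q(u,v)}(\xi,\eta,\tau)=\sum_{(\xi_1,\eta_1)\in\mathbb Z^2}\int_{\mathbb R}(1-\delta_{\xi,0}\delta_{\xi_1,0})\,\widehat u(\xi_1,\eta_1,\tau_1)\,\widehat v(\xi-\xi_1,\eta-\eta_1,\tau-\tau_1)\,d\tau_1,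 \] normalized so that omitting the factor $(1-\delta_{\xi,0}\delta_{\xi_1,0})$ gives the product $uv$. Counting hypothesis $\mathrm{H}(\gamma)$: for every $\varepsilon>0$ there is $c(\varepsilon)$ such that for every $N\ge1$, every square $S\subset\mathbb R^2$ of side length $N$ and every curve $\mathfrak C\subset\mathbb R^2$ of one of the types (i) $\{a(x^2-y^2)+2bxy=c\}$ with $a,b,c\in\mathbb R$, $c\neq0$, or (ii) $\{(x+a)(x^2-y^2)=2(y+b)xy\}$ with $a,b\in\mathbb R$, the number of points of $\mathbb Z^2\cap S$ lying on $\mathfrak C$ but not on a straight line contained in $\mathfrak C$ is at most $c(\varepsilon)N^{\gamma+\varepsilon}$. *)

theory Defs
  imports "HOL-Analysis.Analysis"
begin

text \<open>A space-time function u on T^2 x R is represented by its full Fourier transform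
  uh :: int => int => real => complex, uh xi eta tau.\<close>

type_synonym stfun = "int \<Rightarrow> int \<Rightarrow> real \<Rightarrow> complex"

definition phi :: "int \<Rightarrow> int \<Rightarrow> real" where
  "phi xi eta = real_of_int xi ^ 3 - 3 * real_of_int xi * real_of_int eta ^ 2"

definition jb :: "real \<Rightarrow> real" where
  "jb x = sqrt (1 + x\<^sup>2)"

definition jb2 :: "int \<Rightarrow> int \<Rightarrow> real" where
  "jb2 xi eta = sqrt (1 + real_of_int xi ^ 2 + real_of_int eta ^ 2)"

definition Xsq :: "real \<Rightarrow> real \<Rightarrow> stfun \<Rightarrow> ennreal" where
  "Xsq sr br f = nn_integral lborel (\<lambda>tau. nn_integral (count_space (UNIV :: (int \<times> int) set))
        (\<lambda>k. ennreal ((jb (tau - phi (fst k) (snd k)) powr (2 * br))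
        * (jb2 (fst k) (snd k) powr (2 * sr)) * (cmod (f (fst k) (snd k) tau))\<^sup>2)))"

definition inX :: "real \<Rightarrow> real \<Rightarrow> stfun \<Rightarrow> bool" where
  "inX sr br f \<longleftrightarrow> (\<forall>xi eta. (\<lambda>tau. f xi eta tau) \<in> borel_measurable lborel) \<and> Xsq sr br f < \<infinity>"

text \<open>Squared L^2_t H^sigma norm, computed on the Fourier side (Plancherel in t).\<close>
definition L2Hsq :: "real \<Rightarrow> stfun \<Rightarrow> ennreal" where
  "L2Hsq sg f = nn_integral lborel (\<lambda>tau. nn_integral (count_space (UNIV :: (int \<times> int) set))
        (\<lambda>k. ennreal ((jb2 (fst k) (snd k) powr (2 * sg))
        * (cmod (f (fst k) (snd k) tau))\<^sup>2)))"

definition Q :: "stfun \<Rightarrow> stfun \<Rightarrow> stfun" where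
  "Q u v = (\<lambda>xi eta tau.
     \<Sum>\<^sub>\<infinity>(xi1, eta1)\<in>(UNIV :: (int \<times> int) set).
       (LINT tau1|lborel. (if xi = 0 \<and> xi1 = 0 then 0 else 1)
          * u xi1 eta1 tau1 * v (xi - xi1) (eta - eta1) (tau - tau1)))"

definition curve_i :: "real \<Rightarrow> real \<Rightarrow> real \<Rightarrow> (real \<times> real) set" where
  "curve_i a b c = {(x, y). a * (x\<^sup>2 - y\<^sup>2) + 2 * b * x * y = c}"

definition curve_ii :: "real \<Rightarrow> real \<Rightarrow> (real \<times> real) set" where
  "curve_ii a b = {(x, y). (x + a) * (x\<^sup>2 - y\<^sup>2) = 2 * (y + b) * x * y}"

definition admissible_curve :: "(real \<times> real) set \<Rightarrow> bool" where
  "admissible_curve C \<longleftrightarrow>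
     (\<exists>a b c. c \<noteq> 0 \<and> C = curve_i a b c) \<or> (\<exists>a b. C = curve_ii a b)"

definition is_line :: "(real \<times> real) set \<Rightarrow> bool" where
  "is_line L \<longleftrightarrow> (\<exists>p d. d \<noteq> (0::real \<times> real) \<and> L = {p + t *\<^sub>R d | t. True})"

definition square :: "real \<Rightarrow> real \<Rightarrow> real \<Rightarrow> (real \<times> real) set" where
  "square x0 y0 N = {x0..x0 + N} \<times> {y0..y0 + N}"

definition counted_points :: "(real \<times> real) set \<Rightarrow> (real \<times> real) set \<Rightarrow> (int \<times> int) set" where
  "counted_points S C = {(m, n). (real_of_int m, real_of_int n) \<in> S
       \<and> (real_of_int m, real_of_int n) \<in> C
       \<and> \<not> (\<exists>L. is_line L \<and> L \<subseteq> C \<and> (real_of_int m, real_of_int n) \<in> L)}"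

definition counting_hyp :: "real \<Rightarrow> bool" where
  "counting_hyp gamma \<longleftrightarrow> (\<forall>eps>0. \<exists>c. \<forall>N::real. N \<ge> 1 \<longrightarrow>
     (\<forall>x0 y0 C. admissible_curve C \<longrightarrow>
        real (card (counted_points (square x0 y0 N) C)) \<le> c * N powr (gamma + eps)))"

end

theory Submission
  imports Defs
begin


lemma jb_pos: "jb x > 0" unfolding jb_def by (simp add: add_pos_nonneg)
lemma jb_ge1: "jb x \<ge> 1" unfolding jb_def by simp
lemma jb_ge_abs: "jb x \<ge> \<bar>x\<bar>" unfolding jb_def
  by (metis add.commute le_add_same_cancel2 real_sqrt_abs real_sqrt_le_iff zero_le_one zero_le_power2)
lemma jb_minus: "jb (- x) = jb x" unfolding jb_def by simp
lemma jb_ge_half: "jb x \<ge> (1 + \<bar>x\<bar>) / 2"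
proof -
  have "1 + \<bar>x\<bar> \<le> 2 * jb x" using jb_ge1[of x] jb_ge_abs[of x] by linarith
  thus ?thesis by simp
qed
lemma jb_cont[continuous_intros]: "continuous_on A jb"
  unfolding jb_def by (intro continuous_intros)
lemma jb_meas[measurable]: "jb \<in> borel_measurable borel"
  by (intro borel_measurable_continuous_onI jb_cont)

lemma concave_step:
  fixes q :: real and N :: real
  assumes q: "0 < q" "q < 1" and N: "N \<ge> 0"
  shows "q * (N + 1) powr (q - 1) \<le> (N + 1) powr q - N powr q"
proof (cases "N = 0")
  case True
  then show ?thesis using q by simp
next
  case False
  hence Npos: "N > 0" using N by simp
  have "\<exists>z. N < z \<and> z < N + 1 \<and> (N+1) powr q - N powr q = ((N+1) - N) * (q * z powr (q - 1))"
    by (rule MVT2) (use Npos in \<open>auto intro!: has_real_derivative_powr\<close>)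
  then obtain z where z: "N < z" "z < N + 1" "(N+1) powr q - N powr q = ((N+1) - N) * (q * z powr (q - 1))"
    by blast
  have "(N + 1) powr (q - 1) \<le> z powr (q - 1)"
    using z Npos q by (intro powr_mono2') auto
  then show ?thesis using z q by simp
qed

lemma psum_bound:
  fixes p :: real
  assumes p: "0 < p" "p < 1"
  shows "(\<Sum>j=1..n. real j powr (- p)) \<le> real n powr (1 - p) / (1 - p)"
proof (induction n)
  case 0
  then show ?case by simp
next
  case (Suc n)
  have "(\<Sum>j=1..Suc n. real j powr (- p)) = (\<Sum>j=1..n. real j powr (- p)) + real (Suc n) powr (- p)"
    by simp
  also have "\<dots> \<le> real n powr (1 - p) / (1 - p) + real (Suc n) powr (- p)"
    using Suc by simp
  also have "\<dots> \<le> real (Suc n) powr (1 - p) / (1 - p)"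
  proof -
    have "(1 - p) * (real n + 1) powr ((1 - p) - 1) \<le> (real n + 1) powr (1 - p) - real n powr (1 - p)"
      using concave_step[of "1 - p" "real n"] p by simp
    hence "(1 - p) * real (Suc n) powr (- p) \<le> real (Suc n) powr (1 - p) - real n powr (1 - p)"
      by (simp add: add.commute)
    hence "real n powr (1 - p) + (1 - p) * real (Suc n) powr (- p) \<le> real (Suc n) powr (1 - p)" by simp
    hence "(real n powr (1 - p) + (1 - p) * real (Suc n) powr (- p)) / (1 - p) \<le> real (Suc n) powr (1 - p) / (1 - p)"
      using p by (intro divide_right_mono) auto
    moreover have "(real n powr (1 - p) + (1 - p) * real (Suc n) powr (- p)) / (1 - p) = real n powr (1 - p) / (1 - p) + real (Suc n) powr (- p)"
      using p by (simp add: field_simps)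
    ultimately show ?thesis by simp
  qed
  finally show ?case .
qed

lemma jb_powr_le:
  assumes p: "p > 0" and i: "real i \<le> \<bar>y\<bar>"
  shows "jb y powr (- p) \<le> 2 powr p * (1 + real i) powr (- p)"
proof -
  have "(1 + real i) / 2 \<le> (1 + \<bar>y\<bar>) / 2" using i by simp
  hence "(1 + real i) / 2 \<le> jb y" using jb_ge_half[of y] by linarith
  hence "jb y powr (- p) \<le> ((1 + real i) / 2) powr (- p)"
    using p by (intro powr_mono2') auto
  also have "\<dots> = 2 powr p * (1 + real i) powr (- p)"
    by (simp add: powr_divide powr_minus divide_simps)
  finally show ?thesis .
qed

lemma inj_sum_helper:
  fixes S :: "int set" and d :: "int \<Rightarrow> nat"
  assumes S: "finite S" and inj: "inj_on d S" and T: "T \<ge> 0" and p: "p > 0"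
    and dT: "\<And>n. n \<in> S \<Longrightarrow> real (d n) \<le> T"
    and dy: "\<And>n. n \<in> S \<Longrightarrow> real (d n) \<le> \<bar>\<tau> - real_of_int n\<bar>"
  shows "(\<Sum>n\<in>S. jb (\<tau> - real_of_int n) powr (- p)) \<le> 2 powr p * (\<Sum>j=1..nat \<lfloor>T\<rfloor> + 1. real j powr (- p))"
proof -
  have "(\<Sum>n\<in>S. jb (\<tau> - real_of_int n) powr (- p)) \<le> (\<Sum>n\<in>S. 2 powr p * (1 + real (d n)) powr (- p))"
    by (intro sum_mono jb_powr_le p dy)
  also have "\<dots> = 2 powr p * (\<Sum>i\<in>d ` S. (1 + real i) powr (- p))"
    by (simp add: sum_distrib_left sum.reindex[OF inj])
  also have "(\<Sum>i\<in>d ` S. (1 + real i) powr (- p)) \<le> (\<Sum>i\<in>{0..nat \<lfloor>T\<rfloor>}. (1 + real i) powr (- p))"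
  proof (intro sum_mono2)
    show "d ` S \<subseteq> {0..nat \<lfloor>T\<rfloor>}"
    proof
      fix i assume "i \<in> d ` S"
      then obtain n where "n \<in> S" "i = d n" by auto
      hence "real i \<le> T" using dT by auto
      hence "int i \<le> \<lfloor>T\<rfloor>" by linarith
      thus "i \<in> {0..nat \<lfloor>T\<rfloor>}" by auto
    qed
  qed auto
  also have "(\<Sum>i\<in>{0..nat \<lfloor>T\<rfloor>}. (1 + real i) powr (- p)) = (\<Sum>j=1..nat \<lfloor>T\<rfloor> + 1. real j powr (- p))"
  proof -
    have "(\<Sum>j=1..nat \<lfloor>T\<rfloor> + 1. real j powr (- p)) = (\<Sum>j=Suc 0..Suc (nat \<lfloor>T\<rfloor>). real j powr (- p))" by simp
    also have "\<dots> = (\<Sum>i=0..nat \<lfloor>T\<rfloor>. real (Suc i) powr (- p))"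
      by (rule sum.shift_bounds_cl_Suc_ivl)
    finally show ?thesis by (simp add: add.commute)
  qed
  finally show ?thesis by (simp add: mult_left_mono)
qed

lemma intsum_bound:
  fixes p T \<tau> :: real
  assumes p: "0 < p" "p < 1" and T: "T \<ge> 1"
  shows "(\<Sum>n\<in>{n::int. \<bar>\<tau> - real_of_int n\<bar> \<le> T}. jb (\<tau> - real_of_int n) powr (- p)) \<le> 4 * T powr (1 - p) / (1 - p)"
proof -
  define S where "S = {n::int. \<bar>\<tau> - real_of_int n\<bar> \<le> T}"
  define n0 where "n0 = \<lfloor>\<tau>\<rfloor>"
  have finS: "finite S"
  proof (rule finite_subset)
    show "S \<subseteq> {\<lceil>\<tau> - T\<rceil>..\<lfloor>\<tau> + T\<rfloor>}" unfolding S_def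
      by (auto simp: ceiling_le_iff le_floor_iff abs_le_iff)
  qed auto
  define S1 where "S1 = {n\<in>S. n \<le> n0}"
  define S2 where "S2 = {n\<in>S. \<not> n \<le> n0}"
  have split: "(\<Sum>n\<in>S. jb (\<tau> - real_of_int n) powr (- p)) = (\<Sum>n\<in>S1. jb (\<tau> - real_of_int n) powr (- p)) + (\<Sum>n\<in>S2. jb (\<tau> - real_of_int n) powr (- p))"
  proof -
    have "S = S1 \<union> S2" by (auto simp: S1_def S2_def)
    moreover have "finite S1" "finite S2" "S1 \<inter> S2 = {}" using finS by (auto simp: S1_def S2_def)
    ultimately show ?thesis by (simp add: sum.union_disjoint)
  qed
  define B where "B = 2 powr p * (\<Sum>j=1..nat \<lfloor>T\<rfloor> + 1. real j powr (- p))"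
  have b1: "(\<Sum>n\<in>S1. jb (\<tau> - real_of_int n) powr (- p)) \<le> B"
    unfolding B_def
  proof (rule inj_sum_helper[where d = "\<lambda>n. nat (n0 - n)"])
    show "finite S1" using finS S1_def by auto
    show "inj_on (\<lambda>n. nat (n0 - n)) S1" by (auto simp: inj_on_def S1_def)
    fix n assume n: "n \<in> S1"
    have "real_of_int n0 \<le> \<tau>" unfolding n0_def by simp
    moreover have "n \<le> n0" "\<bar>\<tau> - real_of_int n\<bar> \<le> T" using n by (auto simp: S1_def S_def)
    ultimately show "real (nat (n0 - n)) \<le> T" "real (nat (n0 - n)) \<le> \<bar>\<tau> - real_of_int n\<bar>"
      by (auto simp: of_nat_nat)
  qed (use p T in auto)
  have b2: "(\<Sum>n\<in>S2. jb (\<tau> - real_of_int n) powr (- p)) \<le> B"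
    unfolding B_def
  proof (rule inj_sum_helper[where d = "\<lambda>n. nat (n - n0 - 1)"])
    show "finite S2" using finS S2_def by auto
    show "inj_on (\<lambda>n. nat (n - n0 - 1)) S2" by (auto simp: inj_on_def S2_def)
    fix n assume n: "n \<in> S2"
    have "\<tau> < real_of_int n0 + 1" unfolding n0_def by linarith
    moreover have "n0 < n" "\<bar>\<tau> - real_of_int n\<bar> \<le> T" using n by (auto simp: S2_def S_def)
    ultimately show "real (nat (n - n0 - 1)) \<le> T" "real (nat (n - n0 - 1)) \<le> \<bar>\<tau> - real_of_int n\<bar>"
      by (auto simp: of_nat_nat)
  qed (use p T in auto)
  have "(\<Sum>j=1..nat \<lfloor>T\<rfloor> + 1. real j powr (- p)) \<le> real (nat \<lfloor>T\<rfloor> + 1) powr (1 - p) / (1 - p)"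
    by (rule psum_bound) (use p in auto)
  also have "\<dots> \<le> (2 * T) powr (1 - p) / (1 - p)"
  proof -
    have "real (nat \<lfloor>T\<rfloor> + 1) \<le> 2 * T" using T by linarith
    thus ?thesis using p T by (intro divide_right_mono powr_mono2) auto
  qed
  also have "\<dots> = 2 powr (1 - p) * T powr (1 - p) / (1 - p)"
    using T by (simp add: powr_mult)
  finally have "B \<le> 2 powr p * (2 powr (1 - p) * T powr (1 - p) / (1 - p))"
    unfolding B_def by (intro mult_left_mono) auto
  also have "\<dots> = 2 * T powr (1 - p) / (1 - p)"
    by (simp add: powr_add[symmetric])
  finally have "B \<le> 2 * T powr (1 - p) / (1 - p)" .
  thus ?thesis using split b1 b2 unfolding S_def[symmetric] by simp
qed

lemma jb_powr_le1: "p \<ge> 0 \<Longrightarrow> jb y powr (- p) \<le> 1"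
  using powr_mono2'[of "- p" 1 "jb y"] jb_ge1[of y] by simp

lemma level_sum:
  fixes X :: "'a set" and \<psi> :: "'a \<Rightarrow> int" and A P p \<tau> :: real
  assumes X: "finite X" and lev: "\<And>n. real (card {x\<in>X. \<psi> x = n}) \<le> A"
    and cX: "real (card X) \<le> P" and A: "A \<ge> 1" and p: "0 < p" "p < 1"
  shows "(\<Sum>x\<in>X. jb (\<tau> - real_of_int (\<psi> x)) powr (- p)) \<le> (1 + 4 / (1 - p)) * (A powr p * P powr (1 - p))"
proof -
  define h where "h = (\<lambda>n::int. jb (\<tau> - real_of_int n) powr (- p))"
  have h0: "h n \<ge> 0" for n unfolding h_def by simp
  have P0: "P \<ge> 0" using cX by linarith
  have R0: "A powr p * P powr (1 - p) \<ge> 0" by simp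
  have c1: "1 \<le> 1 + 4 / (1 - p)" using p by simp
  show ?thesis
  proof (cases "P \<le> A")
    case True
    have "(\<Sum>x\<in>X. jb (\<tau> - real_of_int (\<psi> x)) powr (- p)) \<le> (\<Sum>x\<in>X. 1)"
      by (intro sum_mono jb_powr_le1) (use p in auto)
    also have "\<dots> \<le> P" using cX by simp
    also have "P \<le> A powr p * P powr (1 - p)"
    proof (cases "P = 0")
      case False
      hence "P = P powr p * P powr (1 - p)" using P0 by (simp add: powr_add[symmetric])
      also have "\<dots> \<le> A powr p * P powr (1 - p)"
        using True P0 p by (intro mult_right_mono powr_mono2) auto
      finally show ?thesis .
    qed simp
    also have "\<dots> \<le> (1 + 4 / (1 - p)) * (A powr p * P powr (1 - p))"
      using mult_right_mono[OF c1 R0] by simp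
    finally show ?thesis .
  next
    case False
    define T where "T = P / A"
    have T1: "T \<ge> 1" using False A by (simp add: T_def)
    define Xn where "Xn = {x\<in>X. \<bar>\<tau> - real_of_int (\<psi> x)\<bar> \<le> T}"
    define Xf where "Xf = {x\<in>X. \<not> \<bar>\<tau> - real_of_int (\<psi> x)\<bar> \<le> T}"
    have finn: "finite Xn" "finite Xf" using X by (auto simp: Xn_def Xf_def)
    have spl: "(\<Sum>x\<in>X. h (\<psi> x)) = (\<Sum>x\<in>Xn. h (\<psi> x)) + (\<Sum>x\<in>Xf. h (\<psi> x))"
    proof -
      have "X = Xn \<union> Xf" "Xn \<inter> Xf = {}" by (auto simp: Xn_def Xf_def)
      thus ?thesis using finn by (simp add: sum.union_disjoint)
    qed
    have far: "(\<Sum>x\<in>Xf. h (\<psi> x)) \<le> A powr p * P powr (1 - p)"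
    proof -
      have "(\<Sum>x\<in>Xf. h (\<psi> x)) \<le> (\<Sum>x\<in>Xf. T powr (- p))"
      proof (intro sum_mono)
        fix x assume "x \<in> Xf"
        hence "T \<le> jb (\<tau> - real_of_int (\<psi> x))" using jb_ge_abs[of "\<tau> - real_of_int (\<psi> x)"]
          by (auto simp: Xf_def)
        thus "h (\<psi> x) \<le> T powr (- p)" unfolding h_def using T1 p by (intro powr_mono2') auto
      qed
      also have "\<dots> = real (card Xf) * T powr (- p)" by simp
      also have "\<dots> \<le> P * T powr (- p)"
      proof -
        have "card Xf \<le> card X" using X by (intro card_mono) (auto simp: Xf_def)
        thus ?thesis using cX by (intro mult_right_mono) auto
      qed
      also have "\<dots> = A powr p * P powr (1 - p)"
        using A P0 T1 unfolding T_def
        by (simp add: powr_divide powr_minus powr_diff divide_simps)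
      finally show ?thesis .
    qed
    have near: "(\<Sum>x\<in>Xn. h (\<psi> x)) \<le> 4 / (1 - p) * (A powr p * P powr (1 - p))"
    proof -
      have "(\<Sum>x\<in>Xn. h (\<psi> x)) = (\<Sum>n\<in>\<psi> ` Xn. (\<Sum>x\<in>{x\<in>Xn. \<psi> x = n}. h (\<psi> x)))"
        by (rule sum.image_gen[OF finn(1)])
      also have "\<dots> = (\<Sum>n\<in>\<psi> ` Xn. real (card {x\<in>Xn. \<psi> x = n}) * h n)"
        by (intro sum.cong refl) simp
      also have "\<dots> \<le> (\<Sum>n\<in>\<psi> ` Xn. A * h n)"
      proof (intro sum_mono mult_right_mono h0)
        fix n
        have "card {x\<in>Xn. \<psi> x = n} \<le> card {x\<in>X. \<psi> x = n}"
          using X by (intro card_mono) (auto simp: Xn_def)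
        thus "real (card {x\<in>Xn. \<psi> x = n}) \<le> A" using lev[of n] by linarith
      qed
      also have "\<dots> \<le> (\<Sum>n\<in>{n::int. \<bar>\<tau> - real_of_int n\<bar> \<le> T}. A * h n)"
      proof (rule sum_mono2)
        show "finite {n::int. \<bar>\<tau> - real_of_int n\<bar> \<le> T}"
        proof (rule finite_subset)
          show "{n::int. \<bar>\<tau> - real_of_int n\<bar> \<le> T} \<subseteq> {\<lceil>\<tau> - T\<rceil>..\<lfloor>\<tau> + T\<rfloor>}"
            by (auto simp: ceiling_le_iff le_floor_iff abs_le_iff)
        qed auto
        show "\<psi> ` Xn \<subseteq> {n::int. \<bar>\<tau> - real_of_int n\<bar> \<le> T}" by (auto simp: Xn_def)
      qed (use A h0 in auto)
      also have "\<dots> = A * (\<Sum>n\<in>{n::int. \<bar>\<tau> - real_of_int n\<bar> \<le> T}. h n)"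
        by (simp add: sum_distrib_left)
      also have "\<dots> \<le> A * (4 * T powr (1 - p) / (1 - p))"
        unfolding h_def using A by (intro mult_left_mono intsum_bound p T1) auto
      also have "\<dots> = 4 / (1 - p) * (A powr p * P powr (1 - p))"
      proof -
        have "A * T powr (1 - p) = A powr p * P powr (1 - p)"
          using A P0 T1 unfolding T_def
          by (simp add: powr_divide powr_diff divide_simps powr_add[symmetric])
        thus ?thesis by (simp add: field_simps)
      qed
      finally show ?thesis .
    qed
    have "(\<Sum>x\<in>X. h (\<psi> x)) \<le> (1 + 4 / (1 - p)) * (A powr p * P powr (1 - p))"
      using spl far near by (simp add: algebra_simps)
    thus ?thesis unfolding h_def .
  qed
qed

lemma nn_transl:
  fixes f :: "real \<Rightarrow> ennreal"
  assumes [measurable]: "f \<in> borel_measurable borel"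
  shows "(\<integral>\<^sup>+x. f (x - c) \<partial>lborel) = (\<integral>\<^sup>+x. f x \<partial>lborel)"
  using nn_integral_real_affine[of "\<lambda>x. f (x - c)" 1 c] by simp

lemma nn_transl':
  fixes f :: "real \<Rightarrow> ennreal"
  assumes [measurable]: "f \<in> borel_measurable borel"
  shows "(\<integral>\<^sup>+x. f (c + x) \<partial>lborel) = (\<integral>\<^sup>+x. f x \<partial>lborel)"
  using nn_integral_real_affine[of f 1 c] by simp

lemma nn_refl:
  fixes f :: "real \<Rightarrow> ennreal"
  assumes [measurable]: "f \<in> borel_measurable borel"
  shows "(\<integral>\<^sup>+x. f (- x) \<partial>lborel) = (\<integral>\<^sup>+x. f x \<partial>lborel)"
  using nn_integral_real_affine[of f "-1" 0] by simp

lemma int_pow_0R: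
  assumes a: "0 < a" "a < 1" and R: "R \<ge> 0"
  shows "(\<integral>\<^sup>+t. ennreal (if 0 \<le> t \<and> t \<le> R then t powr (- a) else 0) \<partial>lborel) = ennreal (R powr (1 - a) / (1 - a))"
proof -
  have "((\<lambda>x. x powr (- a)) has_integral (R powr (- a + 1) / (- a + 1))) {0..R}"
    using a R by (intro has_integral_powr_from_0) auto
  hence "(\<integral>\<^sup>+t. ennreal (t powr (- a)) * indicator {0..R} t \<partial>lborel) = ennreal (R powr (- a + 1) / (- a + 1))"
    by (intro nn_integral_has_integral_lebesgue') auto
  moreover have "(\<lambda>t. ennreal (if 0 \<le> t \<and> t \<le> R then t powr (- a) else 0)) = (\<lambda>t. ennreal (t powr (- a)) * indicator {0..R} t)"
    by (auto simp: indicator_def)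
  ultimately show ?thesis by (simp add: add.commute)
qed

lemma int_pow_tail:
  assumes c: "c > 1" and R: "R > 0"
  shows "(\<integral>\<^sup>+t. ennreal (if R \<le> t then t powr (- c) else 0) \<partial>lborel) = ennreal (R powr (1 - c) / (c - 1))"
proof -
  have "((\<lambda>x. x powr (- c)) has_integral - (R powr (- c + 1)) / (- c + 1)) {R..}"
    using c R by (intro has_integral_powr_to_inf) auto
  hence "(\<integral>\<^sup>+t. ennreal (t powr (- c)) * indicator {R..} t \<partial>lborel) = ennreal (- (R powr (- c + 1)) / (- c + 1))"
    by (intro nn_integral_has_integral_lebesgue') auto
  moreover have "(\<lambda>t. ennreal (if R \<le> t then t powr (- c) else 0)) = (\<lambda>t. ennreal (t powr (- c)) * indicator {R..} t)"
    by (auto simp: indicator_def)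
  moreover have "- (R powr (- c + 1)) / (- c + 1) = R powr (1 - c) / (c - 1)"
    using c by (simp add: field_simps add.commute)
  ultimately show ?thesis by simp
qed

lemma int_abs_pow_le:
  assumes a: "0 < a" "a < 1" and R: "R \<ge> 0"
  shows "(\<integral>\<^sup>+t. ennreal (if \<bar>t - c\<bar> \<le> R then \<bar>t - c\<bar> powr (- a) else 0) \<partial>lborel) \<le> ennreal (2 * (R powr (1 - a) / (1 - a)))"
proof -
  define g where "g = (\<lambda>t::real. ennreal (if 0 \<le> t \<and> t \<le> R then t powr (- a) else 0))"
  have gm[measurable]: "g \<in> borel_measurable borel" unfolding g_def by measurable
  have "(\<integral>\<^sup>+t. ennreal (if \<bar>t - c\<bar> \<le> R then \<bar>t - c\<bar> powr (- a) else 0) \<partial>lborel)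
      = (\<integral>\<^sup>+t. ennreal (if \<bar>t\<bar> \<le> R then \<bar>t\<bar> powr (- a) else 0) \<partial>lborel)"
    by (rule nn_transl[of "\<lambda>t. ennreal (if \<bar>t\<bar> \<le> R then \<bar>t\<bar> powr (- a) else 0)"]) measurable
  also have "\<dots> \<le> (\<integral>\<^sup>+t. g t + g (- t) \<partial>lborel)"
    by (intro nn_integral_mono) (auto simp: g_def)
  also have "\<dots> = (\<integral>\<^sup>+t. g t \<partial>lborel) + (\<integral>\<^sup>+t. g (- t) \<partial>lborel)"
    by (rule nn_integral_add) auto
  also have "(\<integral>\<^sup>+t. g (- t) \<partial>lborel) = (\<integral>\<^sup>+t. g t \<partial>lborel)" by (rule nn_refl) simp
  also have "(\<integral>\<^sup>+t. g t \<partial>lborel) = ennreal (R powr (1 - a) / (1 - a))"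
    unfolding g_def by (rule int_pow_0R[OF a R])
  finally show ?thesis using a by (simp add: ennreal_plus[symmetric] del: ennreal_plus)
qed

lemma int_abs_tail_le:
  assumes c: "c > 1" and R: "R > 0"
  shows "(\<integral>\<^sup>+t. ennreal (if R \<le> \<bar>t\<bar> then \<bar>t\<bar> powr (- c) else 0) \<partial>lborel) \<le> ennreal (2 * (R powr (1 - c) / (c - 1)))"
proof -
  define g where "g = (\<lambda>t::real. ennreal (if R \<le> t then t powr (- c) else 0))"
  have gm[measurable]: "g \<in> borel_measurable borel" unfolding g_def by measurable
  have "(\<integral>\<^sup>+t. ennreal (if R \<le> \<bar>t\<bar> then \<bar>t\<bar> powr (- c) else 0) \<partial>lborel) \<le> (\<integral>\<^sup>+t. g t + g (- t) \<partial>lborel)"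
    by (intro nn_integral_mono) (use R in \<open>auto simp: g_def\<close>)
  also have "\<dots> = (\<integral>\<^sup>+t. g t \<partial>lborel) + (\<integral>\<^sup>+t. g (- t) \<partial>lborel)"
    by (rule nn_integral_add) auto
  also have "(\<integral>\<^sup>+t. g (- t) \<partial>lborel) = (\<integral>\<^sup>+t. g t \<partial>lborel)" by (rule nn_refl) simp
  also have "(\<integral>\<^sup>+t. g t \<partial>lborel) = ennreal (R powr (1 - c) / (c - 1))"
    unfolding g_def by (rule int_pow_tail[OF c R])
  finally show ?thesis using c by (simp add: ennreal_plus[symmetric] del: ennreal_plus)
qed

lemma jb_powr_mono: "a \<ge> 0 \<Longrightarrow> 0 < m \<Longrightarrow> m \<le> jb y \<Longrightarrow> jb y powr (- a) \<le> m powr (- a)"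
  by (intro powr_mono2') auto

lemma J_pt:
  fixes a x t :: real
  assumes a: "0 < a" and x: "\<bar>x\<bar> > 2" and t: "t \<noteq> 0" "t \<noteq> x"
  defines "R \<equiv> \<bar>x\<bar> / 2"
  shows "jb t powr (- a) * jb (x - t) powr (- a) \<le>
     R powr (- a) * (if \<bar>t - 0\<bar> \<le> R then \<bar>t - 0\<bar> powr (- a) else 0)
   + R powr (- a) * (if \<bar>t - x\<bar> \<le> R then \<bar>t - x\<bar> powr (- a) else 0)
   + 4 powr a * (if R \<le> \<bar>t\<bar> then \<bar>t\<bar> powr (- (2 * a)) else 0)"
proof -
  have R: "R > 1" unfolding R_def using x by simp
  have at: "jb t powr (- a) \<le> \<bar>t\<bar> powr (- a)" using t a jb_ge_abs[of t] by (intro jb_powr_mono) auto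
  have axt: "jb (x - t) powr (- a) \<le> \<bar>t - x\<bar> powr (- a)" using t a jb_ge_abs[of "x - t"]
    by (intro jb_powr_mono) auto
  have nn: "0 \<le> jb t powr (- a)" "0 \<le> jb (x - t) powr (- a)" by auto
  consider (c1) "\<bar>t\<bar> \<le> R" | (c2) "\<not> \<bar>t\<bar> \<le> R" "\<bar>t - x\<bar> \<le> R" | (c3) "\<not> \<bar>t\<bar> \<le> R" "\<not> \<bar>t - x\<bar> \<le> R" by blast
  then show ?thesis
  proof cases
    case c1
    have "R \<le> jb (x - t)" using c1 jb_ge_abs[of "x - t"] unfolding R_def by linarith
    hence "jb (x - t) powr (- a) \<le> R powr (- a)" using R a by (intro jb_powr_mono) auto
    hence "jb t powr (- a) * jb (x - t) powr (- a) \<le> \<bar>t\<bar> powr (- a) * R powr (- a)"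
      using at nn by (intro mult_mono) auto
    thus ?thesis using c1 R by (simp add: mult.commute add_increasing2)
  next
    case c2
    have "R \<le> jb t" using c2 jb_ge_abs[of t] by linarith
    hence "jb t powr (- a) \<le> R powr (- a)" using R a by (intro jb_powr_mono) auto
    hence "jb t powr (- a) * jb (x - t) powr (- a) \<le> R powr (- a) * \<bar>t - x\<bar> powr (- a)"
      using axt nn by (intro mult_mono) auto
    hence "jb t powr (- a) * jb (x - t) powr (- a) \<le> R powr (- a) * \<bar>t - x\<bar> powr (- a) + 4 powr a * \<bar>t\<bar> powr (- (2 * a))"
      by (rule add_increasing2[rotated]) simp
    thus ?thesis using c2 R by simp
  next
    case c3
    have "\<bar>t\<bar> / 4 \<le> \<bar>x - t\<bar>"
    proof (cases "\<bar>t\<bar> \<ge> 4 * R")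
      case True thus ?thesis unfolding R_def by linarith
    next
      case False thus ?thesis using c3 unfolding R_def by linarith
    qed
    hence "\<bar>t\<bar> / 4 \<le> jb (x - t)" using jb_ge_abs[of "x - t"] by linarith
    hence "jb (x - t) powr (- a) \<le> (\<bar>t\<bar> / 4) powr (- a)" using t a by (intro jb_powr_mono) auto
    also have "\<dots> = 4 powr a * \<bar>t\<bar> powr (- a)" by (simp add: powr_divide powr_minus divide_simps)
    finally have "jb t powr (- a) * jb (x - t) powr (- a) \<le> \<bar>t\<bar> powr (- a) * (4 powr a * \<bar>t\<bar> powr (- a))"
      using at nn by (intro mult_mono) auto
    also have "\<dots> = 4 powr a * \<bar>t\<bar> powr (- (2 * a))"
      by (simp add: powr_add[symmetric])
    finally show ?thesis using c3 by simp
  qed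
qed

definition Jk :: "real \<Rightarrow> real \<Rightarrow> ennreal" where
  "Jk a x = (\<integral>\<^sup>+t. ennreal (jb t powr (- a) * jb (x - t) powr (- a)) \<partial>lborel)"

definition CJ :: "real \<Rightarrow> real" where
  "CJ a = 9 * (2 + 2 / (2 * a - 1)) + 4 * (4 / (1 - a) + 8 / (2 * a - 1))"

lemma ennreal_lin: "0 \<le> c \<Longrightarrow> 0 \<le> i \<Longrightarrow> 0 \<le> y \<Longrightarrow> ennreal (c * (i + y)) = ennreal c * (ennreal i + ennreal y)"
  by (simp add: ennreal_mult ennreal_plus)

lemma CJ_pos: "1/2 < a \<Longrightarrow> a < 1 \<Longrightarrow> CJ a > 0"
  unfolding CJ_def by (intro add_pos_pos mult_pos_pos) auto

lemma Jk_small: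
  assumes a: "1/2 < a" "a < 1" and x: "\<bar>x\<bar> \<le> 2"
  shows "Jk a x \<le> ennreal (9 * (2 + 2 / (2 * a - 1)) * jb x powr (1 - 2 * a))"
proof -
  have pt: "jb t powr (- a) * jb (x - t) powr (- a) \<le> 3 * (indicator {-1..1} t + (if 1 \<le> \<bar>t\<bar> then \<bar>t\<bar> powr (- (2 * a)) else 0))" for t
  proof -
    have "1 + t\<^sup>2 \<le> 9 * (1 + (x - t)\<^sup>2)"
    proof -
      have e: "2 * (x - t)\<^sup>2 + 2 * x\<^sup>2 - t\<^sup>2 = (x + (x - t))\<^sup>2" by (simp add: power2_eq_square algebra_simps)
      have "t\<^sup>2 \<le> 2 * (x - t)\<^sup>2 + 2 * x\<^sup>2" using e zero_le_power2[of "x + (x - t)"] by linarith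
      moreover have "\<bar>x\<bar>\<^sup>2 \<le> 2\<^sup>2" by (rule power_mono) (use x in auto)
      hence "x\<^sup>2 \<le> 4" by simp
      ultimately show ?thesis using zero_le_power2[of "x - t"] unfolding distrib_left by linarith
    qed
    hence "sqrt (1 + t\<^sup>2) \<le> sqrt (9 * (1 + (x - t)\<^sup>2))" by (rule real_sqrt_le_mono)
    moreover have "sqrt (9 * (1 + (x - t)\<^sup>2)) = 3 * sqrt (1 + (x - t)\<^sup>2)"
    proof -
      have "sqrt 9 = (3::real)" using real_sqrt_abs[of 3] by simp
      thus ?thesis by (simp only: real_sqrt_mult)
    qed
    ultimately have "sqrt (1 + t\<^sup>2) \<le> 3 * sqrt (1 + (x - t)\<^sup>2)" by (rule ord_le_eq_trans)
    hence "jb t \<le> 3 * jb (x - t)" unfolding jb_def .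
    hence "jb t / 3 \<le> jb (x - t)" by simp
    hence "jb (x - t) powr (- a) \<le> (jb t / 3) powr (- a)" using a jb_pos[of t] by (intro jb_powr_mono) auto
    also have "\<dots> = 3 powr a * jb t powr (- a)" by (simp add: powr_divide powr_minus divide_simps)
    also have "\<dots> \<le> 3 * jb t powr (- a)"
    proof -
      have "3 powr a \<le> 3 powr (1::real)" using a by (intro powr_mono) auto
      thus ?thesis by (intro mult_right_mono) auto
    qed
    finally have "jb t powr (- a) * jb (x - t) powr (- a) \<le> jb t powr (- a) * (3 * jb t powr (- a))"
      by (intro mult_left_mono) auto
    also have "\<dots> = 3 * jb t powr (- (2 * a))" by (simp add: powr_add[symmetric])
    also have "jb t powr (- (2 * a)) \<le> indicator {-1..1} t + (if 1 \<le> \<bar>t\<bar> then \<bar>t\<bar> powr (- (2 * a)) else 0)"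
    proof (cases "1 \<le> \<bar>t\<bar>")
      case True
      hence "jb t powr (- (2 * a)) \<le> \<bar>t\<bar> powr (- (2 * a))" using a jb_ge_abs[of t] by (intro jb_powr_mono) auto
      thus ?thesis using True by (simp add: indicator_def)
    next
      case False
      thus ?thesis using jb_powr_le1[of "2 * a" t] a by (auto simp: indicator_def)
    qed
    finally show ?thesis by simp
  qed
  have "Jk a x \<le> (\<integral>\<^sup>+t. 3 * (indicator {-1..1} t + ennreal (if 1 \<le> \<bar>t\<bar> then \<bar>t\<bar> powr (- (2 * a)) else 0)) \<partial>lborel)"
    unfolding Jk_def
  proof (intro nn_integral_mono)
    fix t
    have "ennreal (jb t powr (- a) * jb (x - t) powr (- a)) \<le> ennreal (3 * (indicator {-1..1} t + (if 1 \<le> \<bar>t\<bar> then \<bar>t\<bar> powr (- (2 * a)) else 0)))"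
      by (rule ennreal_leI[OF pt])
    moreover have "ennreal (3 * (indicator {-1..1} t + (if 1 \<le> \<bar>t\<bar> then \<bar>t\<bar> powr (- (2 * a)) else 0)))
       = 3 * (indicator {-1..1} t + ennreal (if 1 \<le> \<bar>t\<bar> then \<bar>t\<bar> powr (- (2 * a)) else 0))"
      using ennreal_lin[of 3 "indicator {-1..1} t" "if 1 \<le> \<bar>t\<bar> then \<bar>t\<bar> powr (- (2 * a)) else 0"]
      by (simp add: ennreal_indicator)
    ultimately show "ennreal (jb t powr (- a) * jb (x - t) powr (- a)) \<le> 3 * (indicator {-1..1} t + ennreal (if 1 \<le> \<bar>t\<bar> then \<bar>t\<bar> powr (- (2 * a)) else 0))"
      by simp
  qed
  also have "\<dots> \<le> 3 * (2 + ennreal (2 * (1 powr (1 - 2 * a) / (2 * a - 1))))"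
  proof -
    define E where "E = (\<lambda>t::real. ennreal (if 1 \<le> \<bar>t\<bar> then \<bar>t\<bar> powr (- (2 * a)) else 0))"
    have Em: "E \<in> borel_measurable lborel" unfolding E_def by measurable
    have Im: "(indicator {-1..1::real} :: real \<Rightarrow> ennreal) \<in> borel_measurable lborel" by measurable
    have "(\<integral>\<^sup>+t. 3 * (indicator {-1..1} t + E t) \<partial>lborel) = 3 * (\<integral>\<^sup>+t. (indicator {-1..1} t + E t) \<partial>lborel)"
      by (rule nn_integral_cmult) (use Em Im in auto)
    also have "(\<integral>\<^sup>+t. (indicator {-1..1} t + E t) \<partial>lborel) = (\<integral>\<^sup>+t. indicator {-1..1::real} t \<partial>lborel) + (\<integral>\<^sup>+t. E t \<partial>lborel)"
      using nn_integral_add[OF Im Em] by simp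
    also have "(\<integral>\<^sup>+t. indicator {-1..1::real} t \<partial>lborel) = (2::ennreal)" by simp
    finally have eq: "(\<integral>\<^sup>+t. 3 * (indicator {-1..1} t + E t) \<partial>lborel) = 3 * (2 + (\<integral>\<^sup>+t. E t \<partial>lborel))" .
    have Eb: "(\<integral>\<^sup>+t. E t \<partial>lborel) \<le> ennreal (2 * (1 powr (1 - 2 * a) / (2 * a - 1)))"
      unfolding E_def using int_abs_tail_le[of "2 * a" 1] a by simp
    have "3 * (2 + (\<integral>\<^sup>+t. E t \<partial>lborel)) \<le> 3 * (2 + ennreal (2 * (1 powr (1 - 2 * a) / (2 * a - 1))))"
      using Eb by (intro mult_left_mono add_left_mono) auto
    with eq have "(\<integral>\<^sup>+t. 3 * (indicator {-1..1} t + E t) \<partial>lborel) \<le> 3 * (2 + ennreal (2 * (1 powr (1 - 2 * a) / (2 * a - 1))))"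
      by simp
    thus ?thesis unfolding E_def .
  qed
  also have "\<dots> = ennreal (3 * (2 + 2 / (2 * a - 1)))"
  proof -
    have y0: "0 \<le> 2 / (2 * a - 1)" using a by simp
    have "ennreal (3 * (2 + 2 / (2 * a - 1))) = ennreal 3 * ennreal (2 + 2 / (2 * a - 1))"
      using y0 by (intro ennreal_mult) auto
    also have "ennreal (2 + 2 / (2 * a - 1)) = ennreal 2 + ennreal (2 / (2 * a - 1))"
      using y0 by (intro ennreal_plus) auto
    finally show ?thesis by simp
  qed
  also have "\<dots> \<le> ennreal (9 * (2 + 2 / (2 * a - 1)) * jb x powr (1 - 2 * a))"
  proof (intro ennreal_leI)
    have "jb x \<le> 3" unfolding jb_def
    proof -
      have "\<bar>x\<bar>\<^sup>2 \<le> 2\<^sup>2" by (rule power_mono) (use x in auto)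
      hence "1 + x\<^sup>2 \<le> 3\<^sup>2" by simp
      hence "sqrt (1 + x\<^sup>2) \<le> sqrt (3\<^sup>2)" by (rule real_sqrt_le_mono)
      thus "sqrt (1 + x\<^sup>2) \<le> 3" by simp
    qed
    hence "3 powr (1 - 2 * a) \<le> jb x powr (1 - 2 * a)" using a jb_pos[of x] by (intro powr_mono2') auto
    moreover have "3 powr (-1) \<le> 3 powr (1 - 2 * a)" using a by (intro powr_mono) auto
    ultimately have "1 \<le> 3 * jb x powr (1 - 2 * a)" by (simp add: powr_minus)
    hence "3 * (2 + 2 / (2 * a - 1)) * 1 \<le> 3 * (2 + 2 / (2 * a - 1)) * (3 * jb x powr (1 - 2 * a))"
      using a by (intro mult_left_mono) auto
    also have "3 * (2 + 2 / (2 * a - 1)) * (3 * jb x powr (1 - 2 * a)) = 9 * (2 + 2 / (2 * a - 1)) * jb x powr (1 - 2 * a)"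
      by simp
    finally show "3 * (2 + 2 / (2 * a - 1)) \<le> 9 * (2 + 2 / (2 * a - 1)) * jb x powr (1 - 2 * a)" by simp
  qed
  finally show ?thesis .
qed

lemma jb_le: "jb x \<le> 1 + \<bar>x\<bar>"
proof -
  have "1 + x\<^sup>2 \<le> (1 + \<bar>x\<bar>)\<^sup>2" by (simp add: power2_eq_square algebra_simps)
  hence "sqrt (1 + x\<^sup>2) \<le> sqrt ((1 + \<bar>x\<bar>)\<^sup>2)" by (rule real_sqrt_le_mono)
  thus ?thesis unfolding jb_def by simp
qed

lemma Jk_large:
  assumes a: "1/2 < a" "a < 1" and x: "\<bar>x\<bar> > 2"
  shows "Jk a x \<le> ennreal (4 * (4 / (1 - a) + 8 / (2 * a - 1)) * jb x powr (1 - 2 * a))"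
proof -
  define R where "R = \<bar>x\<bar> / 2"
  have R: "R > 1" using x R_def by simp
  define g1 where "g1 = (\<lambda>t. ennreal (if \<bar>t - 0\<bar> \<le> R then \<bar>t - 0\<bar> powr (- a) else 0))"
  define g2 where "g2 = (\<lambda>t. ennreal (if \<bar>t - x\<bar> \<le> R then \<bar>t - x\<bar> powr (- a) else 0))"
  define g3 where "g3 = (\<lambda>t. ennreal (if R \<le> \<bar>t\<bar> then \<bar>t\<bar> powr (- (2 * a)) else 0))"
  have m1: "g1 \<in> borel_measurable lborel" unfolding g1_def by measurable
  have m2: "g2 \<in> borel_measurable lborel" unfolding g2_def by measurable
  have m3: "g3 \<in> borel_measurable lborel" unfolding g3_def by measurable
  have "Jk a x \<le> (\<integral>\<^sup>+t. ennreal (R powr (- a)) * g1 t + ennreal (R powr (- a)) * g2 t + ennreal (4 powr a) * g3 t \<partial>lborel)"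
    unfolding Jk_def
  proof (rule nn_integral_mono_AE)
    have "AE t in lborel. t \<noteq> 0" "AE t in lborel. t \<noteq> x" by (rule AE_lborel_singleton)+
    then show "AE t in lborel. ennreal (jb t powr (- a) * jb (x - t) powr (- a)) \<le> ennreal (R powr (- a)) * g1 t + ennreal (R powr (- a)) * g2 t + ennreal (4 powr a) * g3 t"
    proof eventually_elim
      case (elim t)
      have "jb t powr (- a) * jb (x - t) powr (- a) \<le>
         R powr (- a) * (if \<bar>t - 0\<bar> \<le> R then \<bar>t - 0\<bar> powr (- a) else 0)
       + R powr (- a) * (if \<bar>t - x\<bar> \<le> R then \<bar>t - x\<bar> powr (- a) else 0)
       + 4 powr a * (if R \<le> \<bar>t\<bar> then \<bar>t\<bar> powr (- (2 * a)) else 0)"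
        unfolding R_def using J_pt[of a x t] a x elim by simp
      hence "ennreal (jb t powr (- a) * jb (x - t) powr (- a)) \<le> ennreal (
         R powr (- a) * (if \<bar>t - 0\<bar> \<le> R then \<bar>t - 0\<bar> powr (- a) else 0)
       + R powr (- a) * (if \<bar>t - x\<bar> \<le> R then \<bar>t - x\<bar> powr (- a) else 0)
       + 4 powr a * (if R \<le> \<bar>t\<bar> then \<bar>t\<bar> powr (- (2 * a)) else 0))"
        by (rule ennreal_leI)
      also have "\<dots> = ennreal (R powr (- a)) * g1 t + ennreal (R powr (- a)) * g2 t + ennreal (4 powr a) * g3 t"
        unfolding g1_def g2_def g3_def by (simp add: ennreal_plus ennreal_mult del: ennreal_plus[symmetric])
      finally show ?case .
    qed
  qed
  also have "\<dots> = ennreal (R powr (- a)) * (\<integral>\<^sup>+t. g1 t \<partial>lborel) + ennreal (R powr (- a)) * (\<integral>\<^sup>+t. g2 t \<partial>lborel) + ennreal (4 powr a) * (\<integral>\<^sup>+t. g3 t \<partial>lborel)"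
    using m1 m2 m3 by (simp add: nn_integral_add nn_integral_cmult)
  also have "\<dots> \<le> ennreal (R powr (- a)) * ennreal (2 * (R powr (1 - a) / (1 - a))) + ennreal (R powr (- a)) * ennreal (2 * (R powr (1 - a) / (1 - a))) + ennreal (4 powr a) * ennreal (2 * (R powr (1 - (2 * a)) / (2 * a - 1)))"
  proof (intro add_mono mult_left_mono)
    show "(\<integral>\<^sup>+t. g1 t \<partial>lborel) \<le> ennreal (2 * (R powr (1 - a) / (1 - a)))"
      unfolding g1_def using int_abs_pow_le[of a R 0] a R by simp
    show "(\<integral>\<^sup>+t. g2 t \<partial>lborel) \<le> ennreal (2 * (R powr (1 - a) / (1 - a)))"
      unfolding g2_def using int_abs_pow_le[of a R x] a R by simp
    show "(\<integral>\<^sup>+t. g3 t \<partial>lborel) \<le> ennreal (2 * (R powr (1 - (2 * a)) / (2 * a - 1)))"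
      unfolding g3_def using int_abs_tail_le[of "2 * a" R] a R by simp
  qed auto
  also have "\<dots> = ennreal (R powr (1 - 2 * a) * (4 / (1 - a)) + 4 powr a * (2 * (R powr (1 - (2 * a)) / (2 * a - 1))))"
  proof -
    have e0: "R powr (- a) * R powr (1 - a) = R powr (1 - 2 * a)"
      using powr_add[of R "- a" "1 - a"] by simp
    have e: "R powr (- a) * (2 * (R powr (1 - a) / (1 - a))) = R powr (1 - 2 * a) * (2 / (1 - a))"
      using e0 by (simp add: field_simps)
    show ?thesis using a R
      by (simp add: ennreal_mult[symmetric] ennreal_plus[symmetric] e e0 del: ennreal_plus)
  qed
  also have "\<dots> \<le> ennreal (4 * (4 / (1 - a) + 8 / (2 * a - 1)) * jb x powr (1 - 2 * a))"
  proof (rule ennreal_leI)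
    have "jb x \<le> 4 * R" using jb_le[of x] x unfolding R_def by linarith
    hence "R powr (1 - 2 * a) \<le> (jb x / 4) powr (1 - 2 * a)" using a jb_pos[of x] by (intro powr_mono2') auto
    also have "\<dots> = 4 powr (2 * a - 1) * jb x powr (1 - 2 * a)"
      by (simp add: powr_divide powr_minus_divide divide_simps powr_diff)
    also have "\<dots> \<le> 4 * jb x powr (1 - 2 * a)"
    proof -
      have "4 powr (2 * a - 1) \<le> 4 powr (1::real)" using a by (intro powr_mono) auto
      thus ?thesis by (intro mult_right_mono) auto
    qed
    finally have Rb: "R powr (1 - 2 * a) \<le> 4 * jb x powr (1 - 2 * a)" .
    have q4: "4 powr a \<le> 4" using powr_mono[of a 1 4] a by simp
    have "R powr (1 - 2 * a) * (4 / (1 - a)) + 4 powr a * (2 * (R powr (1 - (2 * a)) / (2 * a - 1)))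
        \<le> R powr (1 - 2 * a) * (4 / (1 - a)) + 4 * (2 * (R powr (1 - (2 * a)) / (2 * a - 1)))"
      using q4 a by (intro add_left_mono mult_right_mono) auto
    also have "\<dots> = R powr (1 - 2 * a) * (4 / (1 - a) + 8 / (2 * a - 1))" by (simp add: field_simps)
    also have "\<dots> \<le> 4 * jb x powr (1 - 2 * a) * (4 / (1 - a) + 8 / (2 * a - 1))"
      using Rb a by (intro mult_right_mono) auto
    finally show "R powr (1 - 2 * a) * (4 / (1 - a)) + 4 powr a * (2 * (R powr (1 - (2 * a)) / (2 * a - 1)))
        \<le> 4 * (4 / (1 - a) + 8 / (2 * a - 1)) * jb x powr (1 - 2 * a)" by (simp only: mult_ac)
  qed
  finally show ?thesis .
qed

lemma CJ_ge:
  assumes a: "1/2 < a" "a < 1"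
  shows "9 * (2 + 2 / (2 * a - 1)) \<le> CJ a" "4 * (4 / (1 - a) + 8 / (2 * a - 1)) \<le> CJ a"
proof -
  have "0 \<le> 9 * (2 + 2 / (2 * a - 1))" "0 \<le> 4 * (4 / (1 - a) + 8 / (2 * a - 1))" using a by auto
  thus "9 * (2 + 2 / (2 * a - 1)) \<le> CJ a" "4 * (4 / (1 - a) + 8 / (2 * a - 1)) \<le> CJ a"
    unfolding CJ_def by linarith+
qed

lemma Jk_bound:
  assumes a: "1/2 < a" "a < 1"
  shows "Jk a x \<le> ennreal (CJ a * jb x powr (1 - 2 * a))"
proof (cases "\<bar>x\<bar> \<le> 2")
  case True
  have "Jk a x \<le> ennreal (9 * (2 + 2 / (2 * a - 1)) * jb x powr (1 - 2 * a))" by (rule Jk_small[OF a True])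
  also have "\<dots> \<le> ennreal (CJ a * jb x powr (1 - 2 * a))"
    using a CJ_ge[OF a] by (intro ennreal_leI mult_right_mono) auto
  finally show ?thesis .
next
  case False
  have "Jk a x \<le> ennreal (4 * (4 / (1 - a) + 8 / (2 * a - 1)) * jb x powr (1 - 2 * a))" using False by (intro Jk_large a) auto
  also have "\<dots> \<le> ennreal (CJ a * jb x powr (1 - 2 * a))"
    using a CJ_ge[OF a] by (intro ennreal_leI mult_right_mono) auto
  finally show ?thesis .
qed



lemma mem_line: "is_line L \<Longrightarrow> \<exists>p1 p2 d1 d2. (d1 \<noteq> 0 \<or> d2 \<noteq> 0) \<and> (\<forall>x y. (x, y) \<in> L \<longleftrightarrow> (\<exists>t. x = p1 + t * d1 \<and> y = p2 + t * d2))"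
proof -
  assume "is_line L"
  then obtain p d where d: "d \<noteq> (0::real \<times> real)" and L: "L = {p + t *\<^sub>R d | t. True}" unfolding is_line_def by blast
  show ?thesis
  proof (intro exI conjI allI)
    show "fst d \<noteq> 0 \<or> snd d \<noteq> 0" using d by (cases d) (auto simp: zero_prod_def)
    fix x y show "(x, y) \<in> L \<longleftrightarrow> (\<exists>t. x = fst p + t * fst d \<and> y = snd p + t * snd d)"
      unfolding L by (cases p, cases d) auto
  qed
qed

lemma no_line_curve_i:
  assumes c: "c \<noteq> 0" and L: "is_line L" and sub: "L \<subseteq> curve_i a b c"
  shows False
proof -
  obtain p1 p2 d1 d2 where d: "d1 \<noteq> 0 \<or> d2 \<noteq> 0" and mem: "\<And>x y. (x, y) \<in> L \<longleftrightarrow> (\<exists>t. x = p1 + t * d1 \<and> y = p2 + t * d2)"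
    using mem_line[OF L] by blast
  have on: "a * ((p1 + t * d1)\<^sup>2 - (p2 + t * d2)\<^sup>2) + 2 * b * (p1 + t * d1) * (p2 + t * d2) = c" for t
  proof -
    have "(p1 + t * d1, p2 + t * d2) \<in> L" using mem by blast
    thus ?thesis using sub unfolding curve_i_def by auto
  qed
  define A where "A = a * (d1\<^sup>2 - d2\<^sup>2) + 2 * b * d1 * d2"
  define B where "B = 2 * a * (p1 * d1 - p2 * d2) + 2 * b * (p1 * d2 + p2 * d1)"
  define C0 where "C0 = a * (p1\<^sup>2 - p2\<^sup>2) + 2 * b * p1 * p2"
  have exp: "a * ((p1 + t * d1)\<^sup>2 - (p2 + t * d2)\<^sup>2) + 2 * b * (p1 + t * d1) * (p2 + t * d2) = A * t\<^sup>2 + B * t + C0" for t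
    unfolding A_def B_def C0_def by (simp add: power2_eq_square algebra_simps)
  have e0: "C0 = c" using on[of 0] exp[of 0] by simp
  have e1: "A + B + C0 = c" using on[of 1] exp[of 1] by simp
  have e2: "A - B + C0 = c" using on[of "-1"] exp[of "-1"] by simp
  have A0: "A = 0" using e0 e1 e2 by linarith
  have B0: "B = 0" using e0 e1 e2 by linarith
  define al where "al = 2 * a * d1 * d2 - b * (d1\<^sup>2 - d2\<^sup>2)"
  define ip where "ip = 2 * a * p1 * p2 - b * (p1\<^sup>2 - p2\<^sup>2)"
  define ipd where "ipd = a * (p1 * d2 + p2 * d1) - b * (p1 * d1 - p2 * d2)"
  have I: "C0 * al + ip * A = B * ipd"
    unfolding C0_def al_def ip_def A_def B_def ipd_def by (simp add: power2_eq_square algebra_simps)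
  have II: "A\<^sup>2 + al\<^sup>2 = (a\<^sup>2 + b\<^sup>2) * (d1\<^sup>2 + d2\<^sup>2)\<^sup>2"
    unfolding A_def al_def by (simp add: power2_eq_square algebra_simps)
  show False
  proof (cases "a = 0 \<and> b = 0")
    case True
    then show ?thesis using e0 c unfolding C0_def by simp
  next
    case False
    have "a\<^sup>2 + b\<^sup>2 > 0" using False by (auto simp: sum_power2_gt_zero_iff)
    moreover have "d1\<^sup>2 + d2\<^sup>2 > 0" using d by (auto simp: sum_power2_gt_zero_iff)
    ultimately have "(a\<^sup>2 + b\<^sup>2) * (d1\<^sup>2 + d2\<^sup>2)\<^sup>2 > 0" by (intro mult_pos_pos) auto
    hence "al\<^sup>2 > 0" using II A0 by simp
    hence "al \<noteq> 0" by auto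
    with I A0 B0 have "C0 = 0" by simp
    with e0 c show False by simp
  qed
qed

lemma three_dvd_sq: "(3::int) dvd m\<^sup>2 \<Longrightarrow> 3 dvd m"
proof -
  assume h: "(3::int) dvd m\<^sup>2"
  define q where "q = m div 3"
  define r where "r = m mod 3"
  have m: "m = 3 * q + r" unfolding q_def r_def by simp
  have r: "0 \<le> r" "r < 3" unfolding r_def by simp_all
  have "m\<^sup>2 = 3 * (3 * q\<^sup>2 + 2 * q * r) + r\<^sup>2" unfolding m by (simp add: power2_eq_square algebra_simps)
  hence "r\<^sup>2 = m\<^sup>2 - 3 * (3 * q\<^sup>2 + 2 * q * r)" by simp
  hence "3 dvd r\<^sup>2" using h by (simp add: dvd_diff)
  moreover have "r = 0 \<or> r = 1 \<or> r = 2" using r by auto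
  ultimately have "r = 0" by (auto simp: power2_eq_square)
  thus ?thesis using m by simp
qed

lemma sq3_zero: "(m::int)\<^sup>2 = 3 * n\<^sup>2 \<Longrightarrow> n = 0"
proof (induction "nat \<bar>n\<bar>" arbitrary: m n rule: less_induct)
  case less
  show ?case
  proof (rule ccontr)
    assume n0: "n \<noteq> 0"
    have "3 dvd m\<^sup>2" unfolding less.prems by (rule dvd_triv_left)
    hence "3 dvd m" by (rule three_dvd_sq)
    then obtain m1 where m1: "m = 3 * m1" by blast
    have e: "n\<^sup>2 = 3 * m1\<^sup>2" using less.prems unfolding m1 by (simp add: power2_eq_square)
    hence "3 dvd n\<^sup>2" by simp
    hence "3 dvd n" by (rule three_dvd_sq)
    then obtain n1 where n1: "n = 3 * n1" by blast
    have e2: "m1\<^sup>2 = 3 * n1\<^sup>2" using e unfolding n1 by (simp add: power2_eq_square)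
    have "nat \<bar>n1\<bar> < nat \<bar>n\<bar>" using n0 n1 by auto
    hence "n1 = 0" using less.hyps e2 by blast
    thus False using n1 n0 by simp
  qed
qed

definition c2c :: "real \<Rightarrow> real \<Rightarrow> real \<Rightarrow> real \<Rightarrow> real \<Rightarrow> real" where
  "c2c a b x y r = 3 * (x * (1 - r\<^sup>2) - 2 * y * r) + a * (1 - r\<^sup>2) - 2 * b * r"

definition fii :: "real \<Rightarrow> real \<Rightarrow> real \<Rightarrow> real \<Rightarrow> real" where
  "fii a b x y = (x + a) * (x\<^sup>2 - y\<^sup>2) - 2 * (y + b) * x * y"

lemma curve_ii_iff: "(x, y) \<in> curve_ii a b \<longleftrightarrow> fii a b x y = 0"
  unfolding curve_ii_def fii_def by auto

lemma line_ii:
  assumes L: "is_line L" and sub: "L \<subseteq> curve_ii a b" and P: "(x0, y0) \<in> L"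
  shows "(x0 = 0 \<and> a = 0) \<or> (\<exists>r. 3 * r\<^sup>2 = 1 \<and> c2c a b x0 y0 r = 0)"
proof -
  obtain p1 p2 d1 d2 where d: "d1 \<noteq> 0 \<or> d2 \<noteq> 0" and mem: "\<And>x y. (x, y) \<in> L \<longleftrightarrow> (\<exists>t. x = p1 + t * d1 \<and> y = p2 + t * d2)"
    using mem_line[OF L] by blast
  obtain t0 where t0: "x0 = p1 + t0 * d1" "y0 = p2 + t0 * d2" using P mem by blast
  have onL: "fii a b (x0 + s * d1) (y0 + s * d2) = 0" for s
  proof -
    have "(x0 + s * d1, y0 + s * d2) \<in> L" using mem[of "x0 + s * d1" "y0 + s * d2"] t0
      by (intro iffD2[OF mem] exI[of _ "t0 + s"]) (auto simp: algebra_simps)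
    thus ?thesis using sub curve_ii_iff by blast
  qed
  show ?thesis
  proof (cases "d1 = 0")
    case True
    hence d2: "d2 \<noteq> 0" using d by simp
    have h: "fii a b x0 (y0 + s) = 0" for s using onL[of "s / d2"] True d2 by simp
    define e2 where "e2 = - 3 * x0 - a"
    define e1 where "e1 = - 6 * x0 * y0 - 2 * a * y0 - 2 * b * x0"
    have ex: "fii a b x0 (y0 + s) = e2 * s\<^sup>2 + e1 * s + fii a b x0 y0" for s
      unfolding e2_def e1_def fii_def by (simp add: power2_eq_square algebra_simps)
    have h0: "fii a b x0 y0 = 0" using h[of 0] by simp
    have s1: "e2 + e1 = 0" using h[of 1] ex[of 1] h0 by auto
    have s2: "e2 - e1 = 0" using h[of "-1"] ex[of "-1"] h0 by auto
    have E2: "e2 = 0" using s1 s2 by linarith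
    have E1: "e1 = 0" using s1 s2 by linarith
    have A: "a = - 3 * x0" using E2 e2_def by simp
    have bx: "b * x0 = 0" using E1 unfolding e1_def A by (simp add: algebra_simps)
    have "fii a b x0 y0 = - 2 * x0 ^ 3 - 2 * (b * x0) * y0"
      unfolding fii_def A by (simp add: power2_eq_square power3_eq_cube algebra_simps)
    hence "x0 ^ 3 = 0" using h0 bx by simp
    hence "x0 = 0" by simp
    thus ?thesis using A by simp
  next
    case False
    define r where "r = d2 / d1"
    have g: "fii a b (x0 + s) (y0 + r * s) = 0" for s using onL[of "s / d1"] False by (simp add: r_def mult.commute)
    define c1 where "c1 = 3 * x0\<^sup>2 - 3 * (2 * r * x0 * y0 + y0\<^sup>2) + a * (2 * x0 - 2 * r * y0) - 2 * b * (r * x0 + y0)"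
    have ex: "fii a b (x0 + s) (y0 + r * s) = (1 - 3 * r\<^sup>2) * s ^ 3 + c2c a b x0 y0 r * s\<^sup>2 + c1 * s + fii a b x0 y0" for s
      unfolding c1_def c2c_def fii_def by (simp add: power2_eq_square power3_eq_cube algebra_simps)
    have g0: "fii a b x0 y0 = 0" using g[of 0] by simp
    have q1: "(1 - 3 * r\<^sup>2) + c2c a b x0 y0 r + c1 = 0" using g[of 1] ex[of 1] g0 by simp
    have q2: "- (1 - 3 * r\<^sup>2) + c2c a b x0 y0 r - c1 = 0" using g[of "-1"] ex[of "-1"] g0 by simp
    have q3: "8 * (1 - 3 * r\<^sup>2) + 4 * c2c a b x0 y0 r + 2 * c1 = 0" using g[of 2] ex[of 2] g0 by simp
    have "c2c a b x0 y0 r = 0" using q1 q2 q3 by linarith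
    moreover have "1 - 3 * r\<^sup>2 = 0"
    proof -
      obtain X C where X: "X = 1 - 3 * r\<^sup>2" "C = c2c a b x0 y0 r" by blast
      have "X + C + c1 = 0" "- X + C - c1 = 0" "8 * X + 4 * C + 2 * c1 = 0" using q1 q2 q3 X by simp_all
      hence "X = 0" by linarith
      thus ?thesis using X by simp
    qed
    ultimately show ?thesis by auto
  qed
qed

lemma c2c_unique:
  fixes x y x' y' :: int
  assumes r: "3 * r\<^sup>2 = 1" and h1: "c2c a b (real_of_int x) (real_of_int y) r = 0" and h2: "c2c a b (real_of_int x') (real_of_int y') r = 0"
  shows "x = x' \<and> y = y'"
proof -
  define m where "m = x - x'"
  define n where "n = y - y'"
  have "3 * (real_of_int m * (1 - r\<^sup>2) - 2 * real_of_int n * r) = 0"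
    using h1 h2 unfolding c2c_def m_def n_def by (simp add: algebra_simps)
  moreover have "1 - r\<^sup>2 = 2 / 3" using r by simp
  ultimately have "real_of_int m = 3 * r * real_of_int n" by (simp add: algebra_simps)
  hence "(real_of_int m)\<^sup>2 = 9 * r\<^sup>2 * (real_of_int n)\<^sup>2" by (simp add: power2_eq_square)
  also have "9 * r\<^sup>2 = 3" using r by simp
  finally have "real_of_int (m\<^sup>2) = real_of_int (3 * n\<^sup>2)" by simp
  hence "m\<^sup>2 = 3 * n\<^sup>2" by (simp only: of_int_eq_iff)
  hence "n = 0" by (rule sq3_zero)
  moreover hence "m = 0" using \<open>m\<^sup>2 = 3 * n\<^sup>2\<close> by simp
  ultimately show ?thesis unfolding m_def n_def by simp
qed


lemma div_char:
  fixes M x q :: int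
  assumes M: "M > 0"
  shows "x div M = q \<longleftrightarrow> M * q \<le> x \<and> x \<le> M * q + M - 1"
proof
  assume h: "x div M = q"
  have "x = M * q + x mod M" using h div_mult_mod_eq[of x M] by (simp add: mult.commute)
  moreover have "0 \<le> x mod M" "x mod M < M" using M by simp_all
  ultimately show "M * q \<le> x \<and> x \<le> M * q + M - 1" by linarith
next
  assume h: "M * q \<le> x \<and> x \<le> M * q + M - 1"
  define r where "r = x - M * q"
  have r: "0 \<le> r" "r < M" using h r_def by auto
  have "x = r + q * M" using r_def by (simp add: algebra_simps)
  hence "x div M = q + r div M" using M by simp
  also have "r div M = 0" using r by (simp add: div_pos_pos_trivial)
  finally show "x div M = q" by simp
qed

definition QF :: "int \<times> int \<Rightarrow> int \<times> int \<Rightarrow> int" where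
  "QF k w = fst k * ((fst w)\<^sup>2 - (snd w)\<^sup>2) - 2 * snd k * fst w * snd w"
definition Wv :: "int \<times> int \<Rightarrow> int \<times> int \<Rightarrow> int \<times> int" where
  "Wv k k1 = (2 * fst k1 - fst k, 2 * snd k1 - snd k)"
definition Dres :: "int \<times> int \<Rightarrow> int \<times> int \<Rightarrow> bool" where
  "Dres k k1 \<longleftrightarrow> QF k (Wv k k1) = 0"
definition phiI :: "int \<times> int \<Rightarrow> int" where
  "phiI k = (fst k)^3 - 3 * fst k * (snd k)\<^sup>2"
definition km :: "int \<times> int \<Rightarrow> int \<times> int \<Rightarrow> int \<times> int" where
  "km k k1 = (fst k - fst k1, snd k - snd k1)"
definition psiI :: "int \<times> int \<Rightarrow> int \<times> int \<Rightarrow> int" where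
  "psiI k k1 = phiI k1 + phiI (km k k1)"
definition allowed :: "int \<times> int \<Rightarrow> int \<times> int \<Rightarrow> bool" where
  "allowed k k1 \<longleftrightarrow> \<not> (fst k = 0 \<and> fst k1 = 0)"
definition Tile :: "int \<Rightarrow> int \<times> int \<Rightarrow> (int \<times> int) set" where
  "Tile M j = {k1. (fst k1 div M, snd k1 div M) = j}"

lemma phi_eq: "phi xi eta = real_of_int (phiI (xi, eta))"
  unfolding phi_def phiI_def by simp

lemma psi_id: "4 * psiI k k1 = phiI k + 3 * QF k (Wv k k1)"
  unfolding psiI_def phiI_def QF_def Wv_def km_def
  by (simp add: power2_eq_square power3_eq_cube algebra_simps)

lemma Tile_eq: "M > 0 \<Longrightarrow> Tile M j = {M * fst j..M * fst j + M - 1} \<times> {M * snd j..M * snd j + M - 1}"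
proof -
  assume M: "M > 0"
  have "k1 \<in> Tile M j \<longleftrightarrow> k1 \<in> {M * fst j..M * fst j + M - 1} \<times> {M * snd j..M * snd j + M - 1}" for k1
  proof -
    have "k1 \<in> Tile M j \<longleftrightarrow> fst k1 div M = fst j \<and> snd k1 div M = snd j"
      unfolding Tile_def by (cases j) auto
    also have "\<dots> \<longleftrightarrow> k1 \<in> {M * fst j..M * fst j + M - 1} \<times> {M * snd j..M * snd j + M - 1}"
      using div_char[OF M, of "fst k1" "fst j"] div_char[OF M, of "snd k1" "snd j"] by (cases k1) auto
    finally show ?thesis .
  qed
  thus ?thesis by blast
qed

lemma Tile_fin: "M > 0 \<Longrightarrow> finite (Tile M j)"
  by (simp add: Tile_eq)

lemma Tile_card: "M > 0 \<Longrightarrow> card (Tile M j) = nat M * nat M"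
  by (simp add: Tile_eq card_cartesian_product)

lemma finite_counted: "finite (counted_points (square x0 y0 N) C)"
proof (rule finite_subset)
  show "counted_points (square x0 y0 N) C \<subseteq> {\<lceil>x0\<rceil>..\<lfloor>x0 + N\<rfloor>} \<times> {\<lceil>y0\<rceil>..\<lfloor>y0 + N\<rfloor>}"
    unfolding counted_points_def square_def by (auto simp: ceiling_le_iff le_floor_iff)
qed auto

lemma R_count:
  fixes M :: int and k j :: "int \<times> int" and n :: int
  assumes M: "M \<ge> 1"
  shows "card {k1 \<in> Tile M j. \<not> Dres k k1 \<and> psiI k k1 = n}
     \<le> card (counted_points (square (real_of_int (2 * M * fst j - fst k)) (real_of_int (2 * M * snd j - snd k)) (real_of_int (2 * M)))
              (curve_i (real_of_int (fst k)) (- real_of_int (snd k)) ((4 * real_of_int n - real_of_int (phiI k)) / 3)))"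
  (is "card ?X \<le> card ?C")
proof (rule card_inj_on_le)
  show "inj_on (Wv k) ?X" unfolding inj_on_def Wv_def by auto
  show "finite ?C" by (rule finite_counted)
  show "Wv k ` ?X \<subseteq> ?C"
  proof
    fix w assume "w \<in> Wv k ` ?X"
    then obtain k1 where k1: "k1 \<in> Tile M j" "\<not> Dres k k1" "psiI k k1 = n" and w: "w = Wv k k1" by auto
    obtain w1 w2 where ww: "w = (w1, w2)" by (cases w)
    have t: "M * fst j \<le> fst k1" "fst k1 \<le> M * fst j + M - 1" "M * snd j \<le> snd k1" "snd k1 \<le> M * snd j + M - 1"
      using k1(1) M unfolding Tile_eq[of M j, OF order.strict_trans2[OF zero_less_one M]] by auto
    have w1: "w1 = 2 * fst k1 - fst k" and w2: "w2 = 2 * snd k1 - snd k" using w ww by (auto simp: Wv_def)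
    have sq: "(real_of_int w1, real_of_int w2) \<in> square (real_of_int (2 * M * fst j - fst k)) (real_of_int (2 * M * snd j - snd k)) (real_of_int (2 * M))"
    proof -
      have "2 * M * fst j - fst k \<le> w1" "w1 \<le> 2 * M * fst j - fst k + 2 * M"
           "2 * M * snd j - snd k \<le> w2" "w2 \<le> 2 * M * snd j - snd k + 2 * M"
        using t w1 w2 by linarith+
      hence "real_of_int (2 * M * fst j - fst k) \<le> real_of_int w1" "real_of_int w1 \<le> real_of_int (2 * M * fst j - fst k) + real_of_int (2 * M)"
           "real_of_int (2 * M * snd j - snd k) \<le> real_of_int w2" "real_of_int w2 \<le> real_of_int (2 * M * snd j - snd k) + real_of_int (2 * M)"
        by (simp_all only: of_int_le_iff of_int_add[symmetric])
      thus ?thesis unfolding square_def by auto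
    qed
    have qf: "real_of_int (QF k w) = (4 * real_of_int n - real_of_int (phiI k)) / 3"
    proof -
      have "4 * psiI k k1 = phiI k + 3 * QF k w" using psi_id[of k k1] w by simp
      hence "real_of_int (4 * psiI k k1) = real_of_int (phiI k + 3 * QF k w)" by simp
      thus ?thesis using k1(3) by simp
    qed
    have cnz: "(4 * real_of_int n - real_of_int (phiI k)) / 3 \<noteq> 0"
      using qf k1(2) w unfolding Dres_def by (metis of_int_eq_0_iff)
    have cu: "(real_of_int w1, real_of_int w2) \<in> curve_i (real_of_int (fst k)) (- real_of_int (snd k)) ((4 * real_of_int n - real_of_int (phiI k)) / 3)"
      unfolding curve_i_def using qf unfolding ww QF_def by (simp add: algebra_simps)
    have nl: "\<not> (\<exists>L. is_line L \<and> L \<subseteq> curve_i (real_of_int (fst k)) (- real_of_int (snd k)) ((4 * real_of_int n - real_of_int (phiI k)) / 3) \<and> (real_of_int w1, real_of_int w2) \<in> L)"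
      using no_line_curve_i[OF cnz] by blast
    show "w \<in> ?C" unfolding counted_points_def ww using sq cu nl by auto
  qed
qed


lemma subsingleton_card: "(\<And>x y. x \<in> S \<Longrightarrow> y \<in> S \<Longrightarrow> x = y) \<Longrightarrow> finite S \<and> card S \<le> 1"
proof -
  assume h: "\<And>x y. x \<in> S \<Longrightarrow> y \<in> S \<Longrightarrow> x = y"
  show ?thesis
  proof (cases "S = {}")
    case False
    then obtain x where "x \<in> S" by blast
    hence "S = {x}" using h by blast
    thus ?thesis by simp
  qed simp
qed

lemma D_count:
  fixes k1 :: "int \<times> int" and m :: nat
  shows "card {k. \<bar>fst k\<bar> \<le> 2 ^ m \<and> \<bar>snd k\<bar> \<le> 2 ^ m \<and> Dres k k1 \<and> allowed k k1}
    \<le> card (counted_points (square (real_of_int (2 * fst k1 - 2 ^ m)) (real_of_int (2 * snd k1 - 2 ^ m)) (2 ^ (m + 1)))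
          (curve_ii (- 2 * real_of_int (fst k1)) (- 2 * real_of_int (snd k1)))) + 2"
  (is "card ?Y \<le> card ?C + 2")
proof -
  define a where "a = - 2 * real_of_int (fst k1)"
  define b where "b = - 2 * real_of_int (snd k1)"
  define Ex where "Ex = {w::int \<times> int. (\<exists>L. is_line L \<and> L \<subseteq> curve_ii a b \<and> (real_of_int (fst w), real_of_int (snd w)) \<in> L) \<and> \<not> (fst w = 0 \<and> fst k1 = 0)}"
  define \<rho> where "\<rho> = sqrt (1 / 3 :: real)"
  define Sp where "Sp = {w::int \<times> int. c2c a b (real_of_int (fst w)) (real_of_int (snd w)) \<rho> = 0}"
  define Sm where "Sm = {w::int \<times> int. c2c a b (real_of_int (fst w)) (real_of_int (snd w)) (- \<rho>) = 0}"
  have r3: "3 * \<rho>\<^sup>2 = 1" "3 * (- \<rho>)\<^sup>2 = 1" unfolding \<rho>_def by simp_all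
  have Sp: "finite Sp \<and> card Sp \<le> 1"
    by (rule subsingleton_card) (use c2c_unique[OF r3(1)] in \<open>auto simp: Sp_def prod_eq_iff\<close>)
  have Sm: "finite Sm \<and> card Sm \<le> 1"
    by (rule subsingleton_card) (use c2c_unique[OF r3(2)] in \<open>auto simp: Sm_def prod_eq_iff\<close>)
  have ExS: "Ex \<subseteq> Sp \<union> Sm"
  proof
    fix w assume w: "w \<in> Ex"
    then obtain L where L: "is_line L" "L \<subseteq> curve_ii a b" "(real_of_int (fst w), real_of_int (snd w)) \<in> L"
      and al: "\<not> (fst w = 0 \<and> fst k1 = 0)" unfolding Ex_def by blast
    from line_ii[OF L] have "(real_of_int (fst w) = 0 \<and> a = 0) \<or> (\<exists>r. 3 * r\<^sup>2 = 1 \<and> c2c a b (real_of_int (fst w)) (real_of_int (snd w)) r = 0)" .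
    moreover have "\<not> (real_of_int (fst w) = 0 \<and> a = 0)" using al unfolding a_def by simp
    ultimately obtain r where r: "3 * r\<^sup>2 = 1" "c2c a b (real_of_int (fst w)) (real_of_int (snd w)) r = 0" by blast
    have "r\<^sup>2 = \<rho>\<^sup>2" using r(1) r3(1) by simp
    hence "r = \<rho> \<or> r = - \<rho>" by (simp add: power2_eq_iff)
    thus "w \<in> Sp \<union> Sm" using r(2) unfolding Sp_def Sm_def by auto
  qed
  have finEx: "finite Ex" using ExS Sp Sm by (meson finite_Un finite_subset)
  have cEx: "card Ex \<le> 2"
  proof -
    have "card Ex \<le> card (Sp \<union> Sm)" using ExS Sp Sm by (intro card_mono) auto
    also have "\<dots> \<le> card Sp + card Sm" by (rule card_Un_le)
    finally show ?thesis using Sp Sm by linarith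
  qed
  have inj: "inj_on (\<lambda>k. Wv k k1) ?Y" unfolding inj_on_def Wv_def by (auto simp: prod_eq_iff)
  have img: "(\<lambda>k. Wv k k1) ` ?Y \<subseteq> ?C \<union> Ex"
  proof
    fix w assume "w \<in> (\<lambda>k. Wv k k1) ` ?Y"
    then obtain k where k: "\<bar>fst k\<bar> \<le> 2 ^ m" "\<bar>snd k\<bar> \<le> 2 ^ m" "Dres k k1" "allowed k k1" and w: "w = Wv k k1" by auto
    have w1: "fst w = 2 * fst k1 - fst k" and w2: "snd w = 2 * snd k1 - snd k" using w by (auto simp: Wv_def)
    have sq: "(real_of_int (fst w), real_of_int (snd w)) \<in> square (real_of_int (2 * fst k1 - 2 ^ m)) (real_of_int (2 * snd k1 - 2 ^ m)) (2 ^ (m + 1))"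
    proof -
      have ib: "2 * fst k1 - 2 ^ m \<le> fst w" "fst w \<le> 2 * fst k1 - 2 ^ m + 2 ^ (m + 1)"
           "2 * snd k1 - 2 ^ m \<le> snd w" "snd w \<le> 2 * snd k1 - 2 ^ m + 2 ^ (m + 1)"
        using k w1 w2 by auto
      have e1: "real_of_int (2 * fst k1 - 2 ^ m) + 2 ^ (m + 1) = real_of_int (2 * fst k1 - 2 ^ m + 2 ^ (m + 1))" by simp
      have e2: "real_of_int (2 * snd k1 - 2 ^ m) + 2 ^ (m + 1) = real_of_int (2 * snd k1 - 2 ^ m + 2 ^ (m + 1))" by simp
      have "real_of_int (2 * fst k1 - 2 ^ m) \<le> real_of_int (fst w)" "real_of_int (fst w) \<le> real_of_int (2 * fst k1 - 2 ^ m) + 2 ^ (m + 1)"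
           "real_of_int (2 * snd k1 - 2 ^ m) \<le> real_of_int (snd w)" "real_of_int (snd w) \<le> real_of_int (2 * snd k1 - 2 ^ m) + 2 ^ (m + 1)"
        unfolding e1 e2 of_int_le_iff using ib by auto
      thus ?thesis unfolding square_def by auto
    qed
    have cu: "(real_of_int (fst w), real_of_int (snd w)) \<in> curve_ii a b"
    proof -
      have "QF k w = 0" using k(3) w unfolding Dres_def by simp
      hence "real_of_int (QF k w) = 0" by simp
      moreover have "fii a b (real_of_int (fst w)) (real_of_int (snd w)) = - real_of_int (QF k w)"
      proof -
        have fk: "real_of_int (fst k) = 2 * real_of_int (fst k1) - real_of_int (fst w)"
             "real_of_int (snd k) = 2 * real_of_int (snd k1) - real_of_int (snd w)" using w1 w2 by simp_all
        show ?thesis unfolding fii_def QF_def a_def b_def of_int_diff of_int_mult of_int_power fk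
          by (simp add: power2_eq_square algebra_simps)
      qed
      ultimately show ?thesis unfolding curve_ii_iff by simp
    qed
    show "w \<in> ?C \<union> Ex"
    proof (cases "\<exists>L. is_line L \<and> L \<subseteq> curve_ii a b \<and> (real_of_int (fst w), real_of_int (snd w)) \<in> L")
      case True
      have "\<not> (fst w = 0 \<and> fst k1 = 0)" using k(4) w1 unfolding allowed_def by auto
      thus ?thesis using True unfolding Ex_def by auto
    next
      case False
      thus ?thesis using sq cu unfolding counted_points_def a_def b_def by (cases w) auto
    qed
  qed
  have "card ?Y = card ((\<lambda>k. Wv k k1) ` ?Y)" by (rule card_image[OF inj, symmetric])
  also have "\<dots> \<le> card (?C \<union> Ex)" using img finEx finite_counted by (intro card_mono) auto
  also have "\<dots> \<le> card ?C + card Ex" by (rule card_Un_le)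
  finally show ?thesis using cEx by linarith
qed



type_synonym ii = "int \<times> int"

abbreviation csum :: "('a \<Rightarrow> ennreal) \<Rightarrow> ennreal" where
  "csum f \<equiv> nn_integral (count_space UNIV) f"

lemma meas_csum:
  fixes h :: "'i::countable \<Rightarrow> 'a \<Rightarrow> ennreal"
  assumes h: "\<And>i. h i \<in> borel_measurable M"
  shows "(\<lambda>x. \<integral>\<^sup>+i. h i x \<partial>count_space UNIV) \<in> borel_measurable M"
proof -
  interpret S: sigma_finite_measure "count_space (UNIV :: 'i set)" by (rule sigma_finite_measure_count_space)
  have "(\<lambda>x. h (snd x) (fst x)) \<in> borel_measurable (M \<Otimes>\<^sub>M count_space UNIV)"
  proof (rule measurable_compose_countable'[where g = snd and I = UNIV and f = "\<lambda>i x. h i (fst x)"])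
    fix i :: 'i show "(\<lambda>x. h i (fst x)) \<in> borel_measurable (M \<Otimes>\<^sub>M count_space UNIV)"
      using h[of i] by measurable
  qed auto
  hence "case_prod (\<lambda>x i. h i x) \<in> borel_measurable (M \<Otimes>\<^sub>M count_space UNIV)"
    by (simp add: case_prod_beta')
  thus ?thesis by (rule S.borel_measurable_nn_integral)
qed

lemma swap_csum_int:
  fixes h :: "'i::countable \<Rightarrow> 'a \<Rightarrow> ennreal"
  assumes h: "\<And>i. h i \<in> borel_measurable M"
  shows "(\<integral>\<^sup>+x. (\<integral>\<^sup>+i. h i x \<partial>count_space UNIV) \<partial>M) = (\<integral>\<^sup>+i. (\<integral>\<^sup>+x. h i x \<partial>M) \<partial>count_space UNIV)"
  by (rule nn_integral_count_space_nn_integral) (use h in auto)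

lemma swap_csum_csum:
  fixes h :: "'i::countable \<Rightarrow> 'j::countable \<Rightarrow> ennreal"
  shows "csum (\<lambda>j. csum (\<lambda>i. h i j)) = csum (\<lambda>i. csum (\<lambda>j. h i j))"
  by (rule nn_integral_count_space_nn_integral) auto

lemma CS2:
  fixes f g :: "'i::countable \<Rightarrow> real \<Rightarrow> ennreal"
  assumes f: "\<And>i. f i \<in> borel_measurable lborel" and g: "\<And>i. g i \<in> borel_measurable lborel"
  shows "(csum (\<lambda>i. \<integral>\<^sup>+t. f i t * g i t \<partial>lborel))\<^sup>2 \<le> csum (\<lambda>i. \<integral>\<^sup>+t. (f i t)\<^sup>2 \<partial>lborel) * csum (\<lambda>i. \<integral>\<^sup>+t. (g i t)\<^sup>2 \<partial>lborel)"
proof -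
  let ?N = "count_space (UNIV :: 'i set) \<Otimes>\<^sub>M lborel"
  have mf: "(\<lambda>x. f (fst x) (snd x)) \<in> borel_measurable ?N"
    by (rule measurable_pair_measure_countable1[where f = "\<lambda>x. f (fst x) (snd x)", simplified]) (use f in simp)
  have mg: "(\<lambda>x. g (fst x) (snd x)) \<in> borel_measurable ?N"
    by (rule measurable_pair_measure_countable1[where f = "\<lambda>x. g (fst x) (snd x)", simplified]) (use g in simp)
  have e: "csum (\<lambda>i. \<integral>\<^sup>+t. H i t \<partial>lborel) = (\<integral>\<^sup>+x. H (fst x) (snd x) \<partial>?N)"
    if "(\<lambda>x. H (fst x) (snd x)) \<in> borel_measurable ?N" for H :: "'i \<Rightarrow> real \<Rightarrow> ennreal"
    using lborel.nn_integral_fst[OF that] by simp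
  have "csum (\<lambda>i. \<integral>\<^sup>+t. f i t * g i t \<partial>lborel) = (\<integral>\<^sup>+x. f (fst x) (snd x) * g (fst x) (snd x) \<partial>?N)"
    by (rule e) (use mf mg in measurable)
  moreover have "csum (\<lambda>i. \<integral>\<^sup>+t. (f i t)\<^sup>2 \<partial>lborel) = (\<integral>\<^sup>+x. (f (fst x) (snd x))\<^sup>2 \<partial>?N)"
    by (rule e) (use mf in measurable)
  moreover have "csum (\<lambda>i. \<integral>\<^sup>+t. (g i t)\<^sup>2 \<partial>lborel) = (\<integral>\<^sup>+x. (g (fst x) (snd x))\<^sup>2 \<partial>?N)"
    by (rule e) (use mg in measurable)
  ultimately show ?thesis using Cauchy_Schwarz_nn_integral[OF mf mg] by simp
qed

lemma regroup:
  fixes g :: "'a::countable \<Rightarrow> ennreal" and h :: "'a \<Rightarrow> 'b::countable"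
  shows "csum g = csum (\<lambda>j. csum (\<lambda>x. if h x = j then g x else 0))"
proof -
  have "csum (\<lambda>j. csum (\<lambda>x. if h x = j then g x else 0)) = csum (\<lambda>x. csum (\<lambda>j. if h x = j then g x else 0))"
    by (rule swap_csum_csum)
  also have "\<dots> = csum g"
  proof (intro nn_integral_cong)
    fix x
    have "(\<lambda>j. if h x = j then g x else 0) = (\<lambda>j. g x * indicator {h x} j)"
      by (auto simp: indicator_def)
    thus "csum (\<lambda>j. if h x = j then g x else 0) = g x" by simp
  qed
  finally show ?thesis by simp
qed

lemma reindex_km: "csum (\<lambda>k1. g (km k k1)) = csum g"
proof -
  have "bij_betw (km k) UNIV UNIV"
    by (rule bij_betwI[where g = "km k"]) (auto simp: km_def)
  thus ?thesis by (rule nn_integral_bij_count_space)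
qed

lemma reindex_km1: "csum (\<lambda>k. g (km k k1)) = csum g"
proof -
  have "bij_betw (\<lambda>k. km k k1) UNIV UNIV"
    by (rule bij_betwI[where g = "\<lambda>k2. (fst k2 + fst k1, snd k2 + snd k1)"]) (auto simp: km_def)
  thus ?thesis by (rule nn_integral_bij_count_space)
qed

lemma conv_int:
  fixes A B :: "real \<Rightarrow> ennreal"
  assumes [measurable]: "A \<in> borel_measurable borel" "B \<in> borel_measurable borel"
  shows "(\<integral>\<^sup>+\<tau>. (\<integral>\<^sup>+t. A t * B (\<tau> - t) \<partial>lborel) \<partial>lborel) = (\<integral>\<^sup>+t. A t \<partial>lborel) * (\<integral>\<^sup>+t. B t \<partial>lborel)"
proof -
  have "(\<integral>\<^sup>+\<tau>. (\<integral>\<^sup>+t. A t * B (\<tau> - t) \<partial>lborel) \<partial>lborel) = (\<integral>\<^sup>+t. (\<integral>\<^sup>+\<tau>. A t * B (\<tau> - t) \<partial>lborel) \<partial>lborel)"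
    by (rule lborel_pair.Fubini') measurable
  also have "\<dots> = (\<integral>\<^sup>+t. A t * (\<integral>\<^sup>+\<tau>. B \<tau> \<partial>lborel) \<partial>lborel)"
  proof (intro nn_integral_cong)
    fix t
    have "(\<integral>\<^sup>+\<tau>. A t * B (\<tau> - t) \<partial>lborel) = A t * (\<integral>\<^sup>+\<tau>. B (\<tau> - t) \<partial>lborel)"
      by (rule nn_integral_cmult) measurable
    also have "(\<integral>\<^sup>+\<tau>. B (\<tau> - t) \<partial>lborel) = (\<integral>\<^sup>+\<tau>. B \<tau> \<partial>lborel)" by (rule nn_transl) measurable
    finally show "(\<integral>\<^sup>+\<tau>. A t * B (\<tau> - t) \<partial>lborel) = A t * (\<integral>\<^sup>+\<tau>. B \<tau> \<partial>lborel)" .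
  qed
  also have "\<dots> = (\<integral>\<^sup>+t. A t \<partial>lborel) * (\<integral>\<^sup>+t. B t \<partial>lborel)"
    by (rule nn_integral_multc) measurable
  finally show ?thesis .
qed


definition Kf :: "real \<Rightarrow> real \<Rightarrow> real" where "Kf b x = jb x powr (- b)"
definition phk :: "ii \<Rightarrow> real" where "phk k = real_of_int (phiI k)"

lemma Kf_nonneg: "Kf b x \<ge> 0" unfolding Kf_def by simp
lemma Kf_meas[measurable]: "Kf b \<in> borel_measurable borel" unfolding Kf_def by measurable
lemma Kf_sq: "(Kf b x)\<^sup>2 = jb x powr (- (2 * b))"
  unfolding Kf_def power2_eq_square by (simp add: powr_add[symmetric])

definition Bil :: "(ii \<Rightarrow> ii \<Rightarrow> bool) \<Rightarrow> real \<Rightarrow> (ii \<Rightarrow> real \<Rightarrow> real) \<Rightarrow> (ii \<Rightarrow> real \<Rightarrow> real) \<Rightarrow> ii \<Rightarrow> real \<Rightarrow> ennreal" where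
  "Bil P b F G k \<tau> = csum (\<lambda>k1. \<integral>\<^sup>+t. (if P k k1 then ennreal (F k1 t * Kf b (t - phk k1) * G (km k k1) (\<tau> - t) * Kf b (\<tau> - t - phk (km k k1))) else 0) \<partial>lborel)"

lemma psi_phk: "phk k1 + phk (km k k1) = real_of_int (psiI k k1)"
  unfolding phk_def psiI_def by simp

lemma Jk_shift:
  "(\<integral>\<^sup>+t. ennreal (jb (t - \<alpha>) powr (- a) * jb (\<tau> - t - \<beta>) powr (- a)) \<partial>lborel) = Jk a (\<tau> - \<alpha> - \<beta>)"
proof -
  let ?h = "\<lambda>t. ennreal (jb (t - \<alpha>) powr (- a) * jb (\<tau> - t - \<beta>) powr (- a))"
  have "(\<integral>\<^sup>+t. ?h (\<alpha> + t) \<partial>lborel) = (\<integral>\<^sup>+t. ?h t \<partial>lborel)" by (rule nn_transl') measurable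
  moreover have "(\<lambda>t. ?h (\<alpha> + t)) = (\<lambda>t. ennreal (jb t powr (- a) * jb (\<tau> - \<alpha> - \<beta> - t) powr (- a)))"
    by (auto simp: algebra_simps)
  ultimately show ?thesis unfolding Jk_def by simp
qed

lemma GCS:
  fixes P :: "ii \<Rightarrow> ii \<Rightarrow> bool" and F G :: "ii \<Rightarrow> real \<Rightarrow> real" and \<nu> :: "ii \<Rightarrow> real"
  assumes Fn: "\<And>k t. F k t \<ge> 0" and Gn: "\<And>k t. G k t \<ge> 0"
    and Fm: "\<And>k. F k \<in> borel_measurable borel" and Gm: "\<And>k. G k \<in> borel_measurable borel"
    and \<nu>n: "\<And>k. \<nu> k \<ge> 0" and \<nu>0: "\<And>k. \<nu> k = 0 \<Longrightarrow> AE t in lborel. F k t = 0"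
  shows "(Bil P b F G k \<tau>)\<^sup>2 \<le> csum (\<lambda>k1. if P k k1 then ennreal ((\<nu> k1)\<^sup>2) * Jk (2 * b) (\<tau> - real_of_int (psiI k k1)) else 0)
      * csum (\<lambda>k1. if P k k1 then (\<integral>\<^sup>+t. ennreal ((F k1 t / \<nu> k1)\<^sup>2 * (G (km k k1) (\<tau> - t))\<^sup>2) \<partial>lborel) else 0)"
proof -
  define f where "f k1 t = (if P k k1 then ennreal (\<nu> k1 * Kf b (t - phk k1) * Kf b (\<tau> - t - phk (km k k1))) else 0)" for k1 t
  define g where "g k1 t = (if P k k1 then ennreal (F k1 t / \<nu> k1 * G (km k k1) (\<tau> - t)) else 0)" for k1 t
  have fm: "f k1 \<in> borel_measurable lborel" for k1 unfolding f_def by measurable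
  have gm: "g k1 \<in> borel_measurable lborel" for k1 unfolding g_def using Fm[of k1] Gm[of "km k k1"] by measurable
  have eq: "Bil P b F G k \<tau> = csum (\<lambda>k1. \<integral>\<^sup>+t. f k1 t * g k1 t \<partial>lborel)"
    unfolding Bil_def
  proof (rule nn_integral_cong)
    fix k1
    have "AE t in lborel. (if P k k1 then ennreal (F k1 t * Kf b (t - phk k1) * G (km k k1) (\<tau> - t) * Kf b (\<tau> - t - phk (km k k1))) else 0) = f k1 t * g k1 t"
    proof (cases "\<nu> k1 = 0")
      case True
      from \<nu>0[OF True] show ?thesis
        by eventually_elim (simp add: f_def g_def True)
    next
      case False
      show ?thesis
      proof (rule AE_I2)
        fix t
        have "F k1 t * Kf b (t - phk k1) * G (km k k1) (\<tau> - t) * Kf b (\<tau> - t - phk (km k k1))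
           = (\<nu> k1 * Kf b (t - phk k1) * Kf b (\<tau> - t - phk (km k k1))) * (F k1 t / \<nu> k1 * G (km k k1) (\<tau> - t))"
          using False by (simp add: field_simps)
        thus "(if P k k1 then ennreal (F k1 t * Kf b (t - phk k1) * G (km k k1) (\<tau> - t) * Kf b (\<tau> - t - phk (km k k1))) else 0) = f k1 t * g k1 t"
          unfolding f_def g_def using \<nu>n[of k1] Fn Gn Kf_nonneg by (simp add: ennreal_mult[symmetric] del: ennreal_mult)
      qed
    qed
    thus "(\<integral>\<^sup>+t. (if P k k1 then ennreal (F k1 t * Kf b (t - phk k1) * G (km k k1) (\<tau> - t) * Kf b (\<tau> - t - phk (km k k1))) else 0) \<partial>lborel) = (\<integral>\<^sup>+t. f k1 t * g k1 t \<partial>lborel)"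
      by (rule nn_integral_cong_AE)
  qed
  have f2: "(\<integral>\<^sup>+t. (f k1 t)\<^sup>2 \<partial>lborel) = (if P k k1 then ennreal ((\<nu> k1)\<^sup>2) * Jk (2 * b) (\<tau> - real_of_int (psiI k k1)) else 0)" for k1
  proof (cases "P k k1")
    case True
    have "(\<lambda>t. (f k1 t)\<^sup>2) = (\<lambda>t. ennreal ((\<nu> k1)\<^sup>2) * ennreal (jb (t - phk k1) powr (- (2 * b)) * jb (\<tau> - t - phk (km k k1)) powr (- (2 * b))))"
    proof
      fix t
      have "(f k1 t)\<^sup>2 = ennreal ((\<nu> k1 * Kf b (t - phk k1) * Kf b (\<tau> - t - phk (km k k1)))\<^sup>2)"
        unfolding f_def using True \<nu>n[of k1] Kf_nonneg by (simp add: ennreal_power)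
      also have "(\<nu> k1 * Kf b (t - phk k1) * Kf b (\<tau> - t - phk (km k k1)))\<^sup>2 = (\<nu> k1)\<^sup>2 * (jb (t - phk k1) powr (- (2 * b)) * jb (\<tau> - t - phk (km k k1)) powr (- (2 * b)))"
        by (simp add: power_mult_distrib Kf_sq)
      finally show "(f k1 t)\<^sup>2 = ennreal ((\<nu> k1)\<^sup>2) * ennreal (jb (t - phk k1) powr (- (2 * b)) * jb (\<tau> - t - phk (km k k1)) powr (- (2 * b)))"
        by (simp add: ennreal_mult)
    qed
    hence "(\<integral>\<^sup>+t. (f k1 t)\<^sup>2 \<partial>lborel) = ennreal ((\<nu> k1)\<^sup>2) * (\<integral>\<^sup>+t. ennreal (jb (t - phk k1) powr (- (2 * b)) * jb (\<tau> - t - phk (km k k1)) powr (- (2 * b))) \<partial>lborel)"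
      by (simp add: nn_integral_cmult)
    also have "(\<integral>\<^sup>+t. ennreal (jb (t - phk k1) powr (- (2 * b)) * jb (\<tau> - t - phk (km k k1)) powr (- (2 * b))) \<partial>lborel) = Jk (2 * b) (\<tau> - phk k1 - phk (km k k1))"
      by (rule Jk_shift)
    also have "\<tau> - phk k1 - phk (km k k1) = \<tau> - real_of_int (psiI k k1)" using psi_phk[of k1 k] by simp
    finally show ?thesis using True by simp
  next
    case False
    thus ?thesis unfolding f_def by simp
  qed
  have g2: "(\<integral>\<^sup>+t. (g k1 t)\<^sup>2 \<partial>lborel) = (if P k k1 then (\<integral>\<^sup>+t. ennreal ((F k1 t / \<nu> k1)\<^sup>2 * (G (km k k1) (\<tau> - t))\<^sup>2) \<partial>lborel) else 0)" for k1
  proof (cases "P k k1")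
    case True
    have "(g k1 t)\<^sup>2 = ennreal ((F k1 t / \<nu> k1)\<^sup>2 * (G (km k k1) (\<tau> - t))\<^sup>2)" for t
      unfolding g_def using True Fn Gn \<nu>n[of k1] by (simp add: ennreal_power power_mult_distrib power_divide)
    thus ?thesis using True by simp
  next
    case False
    thus ?thesis unfolding g_def by simp
  qed
  show ?thesis unfolding eq using CS2[of f g, OF fm gm] f2 g2 by simp
qed


lemma csum_ge: "f x \<le> csum f"
proof -
  have "f x = (\<integral>\<^sup>+y. f y * indicator {x} y \<partial>count_space UNIV)" by simp
  also have "\<dots> \<le> csum f" by (intro nn_integral_mono) (auto simp: indicator_def)
  finally show ?thesis .
qed

lemma csum_cmult: "csum (\<lambda>x. c * f x) = c * csum f"
  by (rule nn_integral_cmult) simp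

definition fsq :: "(ii \<Rightarrow> real \<Rightarrow> real) \<Rightarrow> ii \<Rightarrow> ennreal" where
  "fsq F k = (\<integral>\<^sup>+t. ennreal ((F k t)\<^sup>2) \<partial>lborel)"

definition nu_pt :: "(ii \<Rightarrow> real \<Rightarrow> real) \<Rightarrow> ii \<Rightarrow> real" where
  "nu_pt F k = sqrt (enn2real (fsq F k))"

lemma nu_sq: "fsq F k < \<infinity> \<Longrightarrow> ennreal ((nu_pt F k)\<^sup>2) = fsq F k"
  unfolding nu_pt_def by (cases "fsq F k") auto

lemma nu_zero:
  assumes Fm: "F k \<in> borel_measurable borel" and fin: "fsq F k < \<infinity>" and z: "nu_pt F k = 0"
  shows "AE t in lborel. F k t = 0"
proof -
  have "fsq F k = 0" using nu_sq[OF fin] z by simp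
  hence "AE t in lborel. ennreal ((F k t)\<^sup>2) = 0" unfolding fsq_def
    by (subst (asm) nn_integral_0_iff_AE) (use Fm in auto)
  thus ?thesis by eventually_elim simp
qed

lemma hat_int:
  assumes fin: "fsq F k < \<infinity>" and Fm: "F k \<in> borel_measurable borel"
  shows "(\<integral>\<^sup>+t. ennreal ((F k t / \<nu>)\<^sup>2) \<partial>lborel) = ennreal (1 / \<nu>\<^sup>2) * fsq F k"
proof -
  have "(\<lambda>t. ennreal ((F k t / \<nu>)\<^sup>2)) = (\<lambda>t. ennreal (1 / \<nu>\<^sup>2) * ennreal ((F k t)\<^sup>2))"
    by (auto simp: power_divide ennreal_mult[symmetric])
  moreover have "(\<integral>\<^sup>+t. ennreal (1 / \<nu>\<^sup>2) * ennreal ((F k t)\<^sup>2) \<partial>lborel) = ennreal (1 / \<nu>\<^sup>2) * (\<integral>\<^sup>+t. ennreal ((F k t)\<^sup>2) \<partial>lborel)"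
    by (rule nn_integral_cmult) (use Fm in measurable)
  ultimately show ?thesis unfolding fsq_def by simp
qed

lemma hat_int_le1:
  assumes fin: "fsq F k < \<infinity>" and Fm: "F k \<in> borel_measurable borel"
  shows "(\<integral>\<^sup>+t. ennreal ((F k t / nu_pt F k)\<^sup>2) \<partial>lborel) \<le> 1"
proof (cases "nu_pt F k = 0")
  case True thus ?thesis by simp
next
  case False
  have "ennreal (1 / (nu_pt F k)\<^sup>2) * fsq F k = ennreal (1 / (nu_pt F k)\<^sup>2) * ennreal ((nu_pt F k)\<^sup>2)"
    using nu_sq[OF fin] by simp
  also have "\<dots> = 1" using False by (simp add: ennreal_mult[symmetric])
  finally show ?thesis using hat_int[OF fin Fm] by simp
qed


lemma Jk_le_CJ:
  assumes a: "1/2 < a" "a < 1"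
  shows "Jk a x \<le> ennreal (CJ a)"
proof -
  have "jb x powr (1 - 2 * a) \<le> 1"
    using powr_mono2'[of "1 - 2 * a" 1 "jb x"] jb_ge1[of x] a by simp
  hence "CJ a * jb x powr (1 - 2 * a) \<le> CJ a" using CJ_pos[OF a] by (simp add: mult_left_le)
  thus ?thesis using Jk_bound[OF a, of x] by (meson ennreal_leI order_trans)
qed

lemma S_int:
  fixes F G :: "ii \<Rightarrow> real \<Rightarrow> real" and \<nu> :: "ii \<Rightarrow> real"
  assumes Fm: "\<And>k. F k \<in> borel_measurable borel" and Gm: "\<And>k. G k \<in> borel_measurable borel"
  shows "(\<integral>\<^sup>+\<tau>. csum (\<lambda>k1. if P k1 then (\<integral>\<^sup>+t. ennreal ((F k1 t / \<nu> k1)\<^sup>2 * (G (km k k1) (\<tau> - t))\<^sup>2) \<partial>lborel) else 0) \<partial>lborel)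
    = csum (\<lambda>k1. if P k1 then (\<integral>\<^sup>+t. ennreal ((F k1 t / \<nu> k1)\<^sup>2) \<partial>lborel) * fsq G (km k k1) else 0)"
proof -
  have m: "(\<lambda>\<tau>. if P k1 then (\<integral>\<^sup>+t. ennreal ((F k1 t / \<nu> k1)\<^sup>2 * (G (km k k1) (\<tau> - t))\<^sup>2) \<partial>lborel) else 0) \<in> borel_measurable lborel" for k1
    using Fm[of k1] Gm[of "km k k1"] by measurable
  have "(\<integral>\<^sup>+\<tau>. csum (\<lambda>k1. if P k1 then (\<integral>\<^sup>+t. ennreal ((F k1 t / \<nu> k1)\<^sup>2 * (G (km k k1) (\<tau> - t))\<^sup>2) \<partial>lborel) else 0) \<partial>lborel)
    = csum (\<lambda>k1. \<integral>\<^sup>+\<tau>. (if P k1 then (\<integral>\<^sup>+t. ennreal ((F k1 t / \<nu> k1)\<^sup>2 * (G (km k k1) (\<tau> - t))\<^sup>2) \<partial>lborel) else 0) \<partial>lborel)"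
    by (rule swap_csum_int[OF m])
  also have "\<dots> = csum (\<lambda>k1. if P k1 then (\<integral>\<^sup>+t. ennreal ((F k1 t / \<nu> k1)\<^sup>2) \<partial>lborel) * fsq G (km k k1) else 0)"
  proof (rule nn_integral_cong)
    fix k1
    show "(\<integral>\<^sup>+\<tau>. (if P k1 then (\<integral>\<^sup>+t. ennreal ((F k1 t / \<nu> k1)\<^sup>2 * (G (km k k1) (\<tau> - t))\<^sup>2) \<partial>lborel) else 0) \<partial>lborel)
       = (if P k1 then (\<integral>\<^sup>+t. ennreal ((F k1 t / \<nu> k1)\<^sup>2) \<partial>lborel) * fsq G (km k k1) else 0)"
    proof (cases "P k1")
      case True
      have "(\<integral>\<^sup>+\<tau>. (\<integral>\<^sup>+t. ennreal ((F k1 t / \<nu> k1)\<^sup>2) * ennreal ((G (km k k1) (\<tau> - t))\<^sup>2) \<partial>lborel) \<partial>lborel)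
          = (\<integral>\<^sup>+t. ennreal ((F k1 t / \<nu> k1)\<^sup>2) \<partial>lborel) * (\<integral>\<^sup>+t. ennreal ((G (km k k1) t)\<^sup>2) \<partial>lborel)"
        by (rule conv_int) (use Fm[of k1] Gm[of "km k k1"] in measurable)
      thus ?thesis using True by (simp add: ennreal_mult fsq_def)
    qed simp
  qed
  finally show ?thesis .
qed


lemma S_meas:
  fixes F G :: "ii \<Rightarrow> real \<Rightarrow> real" and \<nu> :: "ii \<Rightarrow> real"
  assumes Fm: "\<And>k. F k \<in> borel_measurable borel" and Gm: "\<And>k. G k \<in> borel_measurable borel"
  shows "(\<lambda>\<tau>. csum (\<lambda>k1. if P k1 then (\<integral>\<^sup>+t. ennreal ((F k1 t / \<nu> k1)\<^sup>2 * (G (km k k1) (\<tau> - t))\<^sup>2) \<partial>lborel) else 0)) \<in> borel_measurable lborel"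
proof (rule meas_csum)
  fix k1
  show "(\<lambda>\<tau>. if P k1 then (\<integral>\<^sup>+t. ennreal ((F k1 t / \<nu> k1)\<^sup>2 * (G (km k k1) (\<tau> - t))\<^sup>2) \<partial>lborel) else 0) \<in> borel_measurable lborel"
    using Fm[of k1] Gm[of "km k k1"] by measurable
qed

lemma TD:
  fixes F G :: "ii \<Rightarrow> real \<Rightarrow> real" and w :: "ii \<Rightarrow> real" and b CD :: real
  assumes Fn: "\<And>k t. F k t \<ge> 0" and Gn: "\<And>k t. G k t \<ge> 0"
    and Fm: "\<And>k. F k \<in> borel_measurable borel" and Gm: "\<And>k. G k \<in> borel_measurable borel"
    and XF: "csum (fsq F) < \<infinity>" and XG: "csum (fsq G) < \<infinity>"
    and b: "1/4 < b" "b < 1/2" and wn: "\<And>k. w k \<ge> 0"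
    and HD: "\<And>k1. csum (\<lambda>k. if allowed k k1 \<and> Dres k k1 then ennreal (w k) else 0) \<le> ennreal CD"
  shows "(\<integral>\<^sup>+\<tau>. csum (\<lambda>k. ennreal (w k) * (Bil (\<lambda>k k1. allowed k k1 \<and> Dres k k1) b F G k \<tau>)\<^sup>2) \<partial>lborel)
     \<le> ennreal (CJ (2 * b)) * ennreal CD * csum (fsq F) * csum (fsq G)"
proof -
  define P where "P = (\<lambda>k k1. allowed k k1 \<and> Dres k k1)"
  define \<nu> where "\<nu> = nu_pt F"
  define S where "S k \<tau> = csum (\<lambda>k1. if P k k1 then (\<integral>\<^sup>+t. ennreal ((F k1 t / \<nu> k1)\<^sup>2 * (G (km k k1) (\<tau> - t))\<^sup>2) \<partial>lborel) else 0)" for k \<tau>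
  define aD where "aD k = csum (\<lambda>k1. if P k k1 then fsq F k1 else 0)" for k
  have a: "1/2 < 2 * b" "2 * b < 1" using b by auto
  have fin: "fsq F k < \<infinity>" for k using csum_ge[of "fsq F" k] XF by (simp add: top.not_eq_extremum)
  have pt: "(Bil P b F G k \<tau>)\<^sup>2 \<le> ennreal (CJ (2 * b)) * aD k * S k \<tau>" for k \<tau>
  proof -
    have "(Bil P b F G k \<tau>)\<^sup>2 \<le> csum (\<lambda>k1. if P k k1 then ennreal ((\<nu> k1)\<^sup>2) * Jk (2 * b) (\<tau> - real_of_int (psiI k k1)) else 0) * S k \<tau>"
      unfolding S_def \<nu>_def
      by (rule GCS[OF Fn Gn Fm Gm]) (auto simp: nu_pt_def intro: nu_zero[OF Fm fin])
    also have "csum (\<lambda>k1. if P k k1 then ennreal ((\<nu> k1)\<^sup>2) * Jk (2 * b) (\<tau> - real_of_int (psiI k k1)) else 0)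
        \<le> csum (\<lambda>k1. ennreal (CJ (2 * b)) * (if P k k1 then fsq F k1 else 0))"
    proof (intro nn_integral_mono)
      fix k1
      show "(if P k k1 then ennreal ((\<nu> k1)\<^sup>2) * Jk (2 * b) (\<tau> - real_of_int (psiI k k1)) else 0) \<le> ennreal (CJ (2 * b)) * (if P k k1 then fsq F k1 else 0)"
        using Jk_le_CJ[OF a, of "\<tau> - real_of_int (psiI k k1)"] nu_sq[OF fin, of k1] unfolding \<nu>_def
        by (auto simp: mult.commute intro: mult_left_mono)
    qed
    also have "\<dots> = ennreal (CJ (2 * b)) * aD k" unfolding aD_def by (rule csum_cmult)
    finally show ?thesis by (simp add: mult_right_mono)
  qed
  have Sm: "(\<lambda>\<tau>. S k \<tau>) \<in> borel_measurable lborel" for k unfolding S_def by (rule S_meas[OF Fm Gm])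
  have Sint: "(\<integral>\<^sup>+\<tau>. S k \<tau> \<partial>lborel) \<le> csum (fsq G)" for k
  proof -
    have "(\<integral>\<^sup>+\<tau>. S k \<tau> \<partial>lborel) = csum (\<lambda>k1. if P k k1 then (\<integral>\<^sup>+t. ennreal ((F k1 t / \<nu> k1)\<^sup>2) \<partial>lborel) * fsq G (km k k1) else 0)"
      unfolding S_def by (rule S_int[OF Fm Gm])
    also have "\<dots> \<le> csum (\<lambda>k1. fsq G (km k k1))"
    proof (intro nn_integral_mono)
      fix k1
      have h1: "(\<integral>\<^sup>+t. ennreal ((F k1 t / \<nu> k1)\<^sup>2) \<partial>lborel) \<le> 1" unfolding \<nu>_def by (rule hat_int_le1[OF fin Fm])
      show "(if P k k1 then (\<integral>\<^sup>+t. ennreal ((F k1 t / \<nu> k1)\<^sup>2) \<partial>lborel) * fsq G (km k k1) else 0) \<le> fsq G (km k k1)"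
        using mult_right_mono[OF h1, of "fsq G (km k k1)"] by auto
    qed
    also have "\<dots> = csum (fsq G)" by (rule reindex_km)
    finally show ?thesis .
  qed
  have "(\<integral>\<^sup>+\<tau>. csum (\<lambda>k. ennreal (w k) * (Bil P b F G k \<tau>)\<^sup>2) \<partial>lborel)
      \<le> (\<integral>\<^sup>+\<tau>. csum (\<lambda>k. ennreal (w k) * (ennreal (CJ (2 * b)) * aD k) * S k \<tau>) \<partial>lborel)"
    by (intro nn_integral_mono) (use pt in \<open>simp add: mult.assoc mult_left_mono\<close>)
  also have "\<dots> = csum (\<lambda>k. \<integral>\<^sup>+\<tau>. ennreal (w k) * (ennreal (CJ (2 * b)) * aD k) * S k \<tau> \<partial>lborel)"
    by (rule swap_csum_int) (use Sm in measurable)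
  also have "\<dots> = csum (\<lambda>k. ennreal (w k) * (ennreal (CJ (2 * b)) * aD k) * (\<integral>\<^sup>+\<tau>. S k \<tau> \<partial>lborel))"
    by (intro nn_integral_cong nn_integral_cmult) (use Sm in auto)
  also have "\<dots> \<le> csum (\<lambda>k. ennreal (w k) * (ennreal (CJ (2 * b)) * aD k) * csum (fsq G))"
    by (intro nn_integral_mono mult_left_mono Sint) auto
  also have "\<dots> = ennreal (CJ (2 * b)) * csum (fsq G) * csum (\<lambda>k. ennreal (w k) * aD k)"
    by (subst csum_cmult[symmetric]) (simp add: mult_ac)
  also have "\<dots> \<le> ennreal (CJ (2 * b)) * csum (fsq G) * (ennreal CD * csum (fsq F))"
  proof (rule mult_left_mono[OF _ zero_le])
    show "csum (\<lambda>k. ennreal (w k) * aD k) \<le> ennreal CD * csum (fsq F)"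
  proof -
    have "csum (\<lambda>k. ennreal (w k) * aD k) = csum (\<lambda>k. csum (\<lambda>k1. if P k k1 then ennreal (w k) * fsq F k1 else 0))"
      unfolding aD_def csum_cmult[symmetric] by (intro nn_integral_cong) auto
    also have "\<dots> = csum (\<lambda>k1. csum (\<lambda>k. if P k k1 then ennreal (w k) * fsq F k1 else 0))"
      by (rule swap_csum_csum)
    also have "\<dots> = csum (\<lambda>k1. fsq F k1 * csum (\<lambda>k. if P k k1 then ennreal (w k) else 0))"
      unfolding csum_cmult[symmetric] by (intro nn_integral_cong) (auto simp: mult.commute)
    also have "\<dots> \<le> csum (\<lambda>k1. fsq F k1 * ennreal CD)"
      using HD unfolding P_def by (intro nn_integral_mono mult_left_mono) auto
    also have "\<dots> = ennreal CD * csum (fsq F)" by (simp add: csum_cmult[symmetric] mult.commute)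
    finally show ?thesis .
  qed
  qed
  finally show ?thesis unfolding P_def by (simp add: mult_ac)
qed


definition idx :: "nat \<Rightarrow> ii \<Rightarrow> ii" where
  "idx m k1 = (fst k1 div 2 ^ m, snd k1 div 2 ^ m)"
definition fSm :: "(ii \<Rightarrow> real \<Rightarrow> real) \<Rightarrow> nat \<Rightarrow> ii \<Rightarrow> ennreal" where
  "fSm F m j = csum (\<lambda>k1. if idx m k1 = j then fsq F k1 else 0)"
definition nuS :: "(ii \<Rightarrow> real \<Rightarrow> real) \<Rightarrow> nat \<Rightarrow> ii \<Rightarrow> real" where
  "nuS F m k1 = sqrt (enn2real (fSm F m (idx m k1)))"
definition Box :: "nat \<Rightarrow> ii \<Rightarrow> ii set" where
  "Box m j = {k2. - (2 ^ m) * (fst j + 2) \<le> fst k2 \<and> fst k2 \<le> - (2 ^ m) * (fst j - 1)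
                \<and> - (2 ^ m) * (snd j + 2) \<le> snd k2 \<and> snd k2 \<le> - (2 ^ m) * (snd j - 1)}"

lemma fSm_sum: "csum (fSm F m) = csum (fsq F)"
  unfolding fSm_def by (rule regroup[symmetric])

lemma fsq_le_fSm: "fsq F k1 \<le> fSm F m (idx m k1)"
  unfolding fSm_def using csum_ge[of "\<lambda>k. if idx m k = idx m k1 then fsq F k else 0" k1] by simp

lemma fSm_fin: "csum (fsq F) < \<infinity> \<Longrightarrow> fSm F m j < \<infinity>"
  using csum_ge[of "fSm F m" j] fSm_sum[of F m] by (simp add: top.not_eq_extremum)

lemma nuS_sq: "csum (fsq F) < \<infinity> \<Longrightarrow> ennreal ((nuS F m k1)\<^sup>2) = fSm F m (idx m k1)"
  unfolding nuS_def using fSm_fin[of F m "idx m k1"] by (cases "fSm F m (idx m k1)") auto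

lemma nuS_zero:
  assumes Fm: "F k1 \<in> borel_measurable borel" and XF: "csum (fsq F) < \<infinity>" and z: "nuS F m k1 = 0"
  shows "AE t in lborel. F k1 t = 0"
proof -
  have "fSm F m (idx m k1) = 0" using nuS_sq[OF XF, of m k1] z by simp
  hence "fsq F k1 = 0" using fsq_le_fSm[of F k1 m] by simp
  hence "AE t in lborel. ennreal ((F k1 t)\<^sup>2) = 0" unfolding fsq_def
    by (subst (asm) nn_integral_0_iff_AE) (use Fm in auto)
  thus ?thesis by eventually_elim simp
qed

lemma tile_hat:
  assumes Fm: "\<And>k. F k \<in> borel_measurable borel" and XF: "csum (fsq F) < \<infinity>"
  shows "csum (\<lambda>k1. if idx m k1 = j then (\<integral>\<^sup>+t. ennreal ((F k1 t / nuS F m k1)\<^sup>2) \<partial>lborel) else 0) \<le> 1"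
proof -
  have fin: "fsq F k < \<infinity>" for k using csum_ge[of "fsq F" k] XF by (simp add: top.not_eq_extremum)
  define \<nu> where "\<nu> = sqrt (enn2real (fSm F m j))"
  have "csum (\<lambda>k1. if idx m k1 = j then (\<integral>\<^sup>+t. ennreal ((F k1 t / nuS F m k1)\<^sup>2) \<partial>lborel) else 0)
      = csum (\<lambda>k1. ennreal (1 / \<nu>\<^sup>2) * (if idx m k1 = j then fsq F k1 else 0))"
  proof (intro nn_integral_cong)
    fix k1
    show "(if idx m k1 = j then (\<integral>\<^sup>+t. ennreal ((F k1 t / nuS F m k1)\<^sup>2) \<partial>lborel) else 0) = ennreal (1 / \<nu>\<^sup>2) * (if idx m k1 = j then fsq F k1 else 0)"
      using hat_int[OF fin Fm, of k1 "nuS F m k1"] unfolding nuS_def \<nu>_def by auto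
  qed
  also have "\<dots> = ennreal (1 / \<nu>\<^sup>2) * fSm F m j" unfolding fSm_def by (rule csum_cmult)
  also have "\<dots> \<le> 1"
  proof (cases "\<nu> = 0")
    case True thus ?thesis by simp
  next
    case False
    have "ennreal (\<nu>\<^sup>2) = fSm F m j" unfolding \<nu>_def using fSm_fin[OF XF, of m j] by (cases "fSm F m j") auto
    hence "ennreal (1 / \<nu>\<^sup>2) * fSm F m j = ennreal (1 / \<nu>\<^sup>2) * ennreal (\<nu>\<^sup>2)" by simp
    also have "\<dots> = 1" using False by (simp add: ennreal_mult[symmetric])
    finally show ?thesis by simp
  qed
  finally show ?thesis .
qed

lemma box_count1:
  fixes M x :: int
  assumes M: "M > 0"
  shows "{j1. - M * (j1 + 2) \<le> x \<and> x \<le> - M * (j1 - 1)} \<subseteq> {(- x) div M - 2..(- x) div M + 1}"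
proof
  fix j1 assume j: "j1 \<in> {j1. - M * (j1 + 2) \<le> x \<and> x \<le> - M * (j1 - 1)}"
  define q where "q = (- x) div M"
  have q: "M * q \<le> - x" "- x < M * q + M"
    using div_char[OF M, of "- x" q] unfolding q_def by auto
  have h1: "M * (j1 - 1) \<le> - x" "- x \<le> M * (j1 + 2)" using j by (auto simp: algebra_simps)
  have "M * (j1 - 1) < M * (q + 1)" using h1 q by (simp add: algebra_simps)
  hence "j1 - 1 < q + 1" using M by (simp add: mult_less_cancel_left_pos)
  moreover have "M * q \<le> M * (j1 + 2)" using q(1) h1(2) by (rule order.trans)
  hence "q \<le> j1 + 2" using M by (simp add: mult_le_cancel_left_pos)
  ultimately show "j1 \<in> {(- x) div M - 2..(- x) div M + 1}" unfolding q_def by auto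
qed

lemma box_count:
  "csum (\<lambda>j. if k2 \<in> Box m j then g else 0) \<le> 16 * g"
proof -
  define M :: int where "M = 2 ^ m"
  have M: "M > 0" unfolding M_def by simp
  define A where "A = {(- fst k2) div M - 2..(- fst k2) div M + 1} \<times> {(- snd k2) div M - 2..(- snd k2) div M + 1}"
  have sub: "{j. k2 \<in> Box m j} \<subseteq> A"
  proof
    fix j assume "j \<in> {j. k2 \<in> Box m j}"
    hence "fst j \<in> {j1. - M * (j1 + 2) \<le> fst k2 \<and> fst k2 \<le> - M * (j1 - 1)}"
          "snd j \<in> {j1. - M * (j1 + 2) \<le> snd k2 \<and> snd k2 \<le> - M * (j1 - 1)}"
      unfolding Box_def M_def by auto
    thus "j \<in> A" unfolding A_def using box_count1[OF M, of "fst k2"] box_count1[OF M, of "snd k2"]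
      by (cases j) auto
  qed
  have cA: "card A = 16" unfolding A_def by (simp add: card_cartesian_product)
  have "csum (\<lambda>j. if k2 \<in> Box m j then g else 0) \<le> csum (\<lambda>j. g * indicator A j)"
    using sub by (intro nn_integral_mono) (auto simp: indicator_def)
  also have "\<dots> = g * of_nat (card A)"
    by (subst nn_integral_cmult) (auto simp: A_def)
  finally show ?thesis using cA by (simp add: mult.commute)
qed

lemma box_mem:
  assumes k: "\<bar>fst k\<bar> \<le> 2 ^ m" "\<bar>snd k\<bar> \<le> 2 ^ m"
  shows "km k k1 \<in> Box m (idx m k1)"
proof -
  define M :: int where "M = 2 ^ m"
  have M: "M > 0" unfolding M_def by simp
  have t1: "M * (fst k1 div M) \<le> fst k1" "fst k1 \<le> M * (fst k1 div M) + M - 1"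
    using div_char[OF M, of "fst k1" "fst k1 div M"] by auto
  have t2: "M * (snd k1 div M) \<le> snd k1" "snd k1 \<le> M * (snd k1 div M) + M - 1"
    using div_char[OF M, of "snd k1" "snd k1 div M"] by auto
  have kk: "\<bar>fst k\<bar> \<le> M" "\<bar>snd k\<bar> \<le> M" using k unfolding M_def by auto
  show ?thesis unfolding Box_def idx_def km_def M_def[symmetric] using t1 t2 kk
    by (auto simp: algebra_simps)
qed


lemma R_kernel:
  fixes F :: "ii \<Rightarrow> real \<Rightarrow> real" and m :: nat and Lm :: real
  assumes HL: "\<And>j. csum (\<lambda>k1. if idx m k1 = j \<and> \<not> Dres k k1 then ennreal (jb (\<tau> - real_of_int (psiI k k1)) powr (1 - 4 * b)) else 0) \<le> ennreal Lm"
    and XF: "csum (fsq F) < \<infinity>" and b: "1/4 < b" "b < 1/2"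
  shows "csum (\<lambda>k1. if allowed k k1 \<and> \<not> Dres k k1 then ennreal ((nuS F m k1)\<^sup>2) * Jk (2 * b) (\<tau> - real_of_int (psiI k k1)) else 0)
     \<le> ennreal (CJ (2 * b)) * ennreal Lm * csum (fsq F)"
proof -
  have a: "1/2 < 2 * b" "2 * b < 1" using b by auto
  define h where "h k1 = (if \<not> Dres k k1 then fSm F m (idx m k1) * ennreal (jb (\<tau> - real_of_int (psiI k k1)) powr (1 - 4 * b)) else 0)" for k1
  have "csum (\<lambda>k1. if allowed k k1 \<and> \<not> Dres k k1 then ennreal ((nuS F m k1)\<^sup>2) * Jk (2 * b) (\<tau> - real_of_int (psiI k k1)) else 0)
      \<le> csum (\<lambda>k1. ennreal (CJ (2 * b)) * h k1)"
  proof (intro nn_integral_mono)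
    fix k1
    have J: "Jk (2 * b) (\<tau> - real_of_int (psiI k k1)) \<le> ennreal (CJ (2 * b)) * ennreal (jb (\<tau> - real_of_int (psiI k k1)) powr (1 - 4 * b))"
      using Jk_bound[OF a, of "\<tau> - real_of_int (psiI k k1)"] CJ_pos[OF a] by (simp add: ennreal_mult)
    show "(if allowed k k1 \<and> \<not> Dres k k1 then ennreal ((nuS F m k1)\<^sup>2) * Jk (2 * b) (\<tau> - real_of_int (psiI k k1)) else 0) \<le> ennreal (CJ (2 * b)) * h k1"
      unfolding h_def nuS_sq[OF XF] using mult_left_mono[OF J, of "fSm F m (idx m k1)"]
      by (auto simp: mult_ac)
  qed
  also have "\<dots> = ennreal (CJ (2 * b)) * csum h" by (rule csum_cmult)
  also have "csum h = csum (\<lambda>j. csum (\<lambda>k1. if idx m k1 = j then h k1 else 0))" by (rule regroup)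
  also have "\<dots> = csum (\<lambda>j. fSm F m j * csum (\<lambda>k1. if idx m k1 = j \<and> \<not> Dres k k1 then ennreal (jb (\<tau> - real_of_int (psiI k k1)) powr (1 - 4 * b)) else 0))"
    unfolding csum_cmult[symmetric] h_def by (intro nn_integral_cong) auto
  also have "\<dots> \<le> csum (\<lambda>j. fSm F m j * ennreal Lm)" by (intro nn_integral_mono mult_left_mono HL) auto
  also have "\<dots> = ennreal Lm * csum (fsq F)"
  proof -
    have "csum (\<lambda>j. fSm F m j * ennreal Lm) = ennreal Lm * csum (fSm F m)"
      by (subst csum_cmult[symmetric]) (simp add: mult.commute)
    thus ?thesis by (simp add: fSm_sum)
  qed
  finally show ?thesis by (simp add: mult_left_mono mult.assoc)
qed


lemma Zm_bound:
  fixes F G :: "ii \<Rightarrow> real \<Rightarrow> real" and mk :: "ii \<Rightarrow> nat"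
  assumes Fm: "\<And>k. F k \<in> borel_measurable borel" and XF: "csum (fsq F) < \<infinity>"
    and HM: "\<And>k. mk k = m \<Longrightarrow> \<bar>fst k\<bar> \<le> 2 ^ m \<and> \<bar>snd k\<bar> \<le> 2 ^ m"
  shows "csum (\<lambda>k. if mk k = m then csum (\<lambda>k1. (\<integral>\<^sup>+t. ennreal ((F k1 t / nuS F m k1)\<^sup>2) \<partial>lborel) * fsq G (km k k1)) else 0)
    \<le> 16 * csum (fsq G)"
proof -
  define hat where "hat k1 = (\<integral>\<^sup>+t. ennreal ((F k1 t / nuS F m k1)\<^sup>2) \<partial>lborel)" for k1
  define B where "B j = csum (\<lambda>k2. if k2 \<in> Box m j then fsq G k2 else 0)" for j
  have "csum (\<lambda>k. if mk k = m then csum (\<lambda>k1. hat k1 * fsq G (km k k1)) else 0)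
      = csum (\<lambda>k. csum (\<lambda>k1. hat k1 * (if mk k = m then fsq G (km k k1) else 0)))"
    by (intro nn_integral_cong) auto
  also have "\<dots> = csum (\<lambda>k1. csum (\<lambda>k. hat k1 * (if mk k = m then fsq G (km k k1) else 0)))"
    by (rule swap_csum_csum)
  also have "\<dots> \<le> csum (\<lambda>k1. hat k1 * csum (\<lambda>k. (\<lambda>k2. if k2 \<in> Box m (idx m k1) then fsq G k2 else 0) (km k k1)))"
  proof (intro nn_integral_mono)
    fix k1
    have "csum (\<lambda>k. hat k1 * (if mk k = m then fsq G (km k k1) else 0)) = hat k1 * csum (\<lambda>k. if mk k = m then fsq G (km k k1) else 0)"
      by (rule csum_cmult)
    also have "\<dots> \<le> hat k1 * csum (\<lambda>k. (\<lambda>k2. if k2 \<in> Box m (idx m k1) then fsq G k2 else 0) (km k k1))"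
      using box_mem HM by (intro mult_left_mono nn_integral_mono) auto
    finally show "csum (\<lambda>k. hat k1 * (if mk k = m then fsq G (km k k1) else 0)) \<le> hat k1 * csum (\<lambda>k. (\<lambda>k2. if k2 \<in> Box m (idx m k1) then fsq G k2 else 0) (km k k1))" .
  qed
  also have "\<dots> = csum (\<lambda>k1. hat k1 * B (idx m k1))"
  proof (rule nn_integral_cong)
    fix k1
    have "csum (\<lambda>k. (\<lambda>k2. if k2 \<in> Box m (idx m k1) then fsq G k2 else 0) (km k k1)) = csum (\<lambda>k2. if k2 \<in> Box m (idx m k1) then fsq G k2 else 0)"
      by (rule reindex_km1)
    thus "hat k1 * csum (\<lambda>k. (\<lambda>k2. if k2 \<in> Box m (idx m k1) then fsq G k2 else 0) (km k k1)) = hat k1 * B (idx m k1)"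
      unfolding B_def by simp
  qed
  also have "\<dots> = csum (\<lambda>j. csum (\<lambda>k1. if idx m k1 = j then hat k1 * B (idx m k1) else 0))"
    by (rule regroup)
  also have "\<dots> = csum (\<lambda>j. B j * csum (\<lambda>k1. if idx m k1 = j then hat k1 else 0))"
    unfolding csum_cmult[symmetric] by (intro nn_integral_cong) (auto simp: mult.commute)
  also have "\<dots> \<le> csum (\<lambda>j. B j * 1)"
    unfolding hat_def using tile_hat[OF Fm XF] by (intro nn_integral_mono mult_left_mono) auto
  also have "\<dots> = csum (\<lambda>k2. csum (\<lambda>j. if k2 \<in> Box m j then fsq G k2 else 0))"
    unfolding B_def by (simp add: swap_csum_csum[of "\<lambda>k2 j. if k2 \<in> Box m j then fsq G k2 else 0"])
  also have "\<dots> \<le> csum (\<lambda>k2. 16 * fsq G k2)" by (intro nn_integral_mono box_count)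
  also have "\<dots> = 16 * csum (fsq G)" by (rule csum_cmult)
  finally show ?thesis unfolding hat_def .
qed


lemma TR:
  fixes F G :: "ii \<Rightarrow> real \<Rightarrow> real" and w :: "ii \<Rightarrow> real" and b CR :: real
    and mk :: "ii \<Rightarrow> nat" and Lm Wm :: "nat \<Rightarrow> real"
  assumes Fn: "\<And>k t. F k t \<ge> 0" and Gn: "\<And>k t. G k t \<ge> 0"
    and Fm: "\<And>k. F k \<in> borel_measurable borel" and Gm: "\<And>k. G k \<in> borel_measurable borel"
    and XF: "csum (fsq F) < \<infinity>" and XG: "csum (fsq G) < \<infinity>"
    and b: "1/4 < b" "b < 1/2" and wn: "\<And>k. w k \<ge> 0"
    and HM: "\<And>k. \<bar>fst k\<bar> \<le> 2 ^ mk k \<and> \<bar>snd k\<bar> \<le> 2 ^ mk k"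
    and HL: "\<And>k \<tau> j. csum (\<lambda>k1. if idx (mk k) k1 = j \<and> \<not> Dres k k1 then ennreal (jb (\<tau> - real_of_int (psiI k k1)) powr (1 - 4 * b)) else 0) \<le> ennreal (Lm (mk k))"
    and Lmn: "\<And>m. Lm m \<ge> 0"
    and HW: "\<And>k. w k \<le> Wm (mk k)"
    and HS: "csum (\<lambda>m::nat. ennreal (Wm m * Lm m)) \<le> ennreal CR"
  shows "(\<integral>\<^sup>+\<tau>. csum (\<lambda>k. ennreal (w k) * (Bil (\<lambda>k k1. allowed k k1 \<and> \<not> Dres k k1) b F G k \<tau>)\<^sup>2) \<partial>lborel)
     \<le> ennreal (CJ (2 * b)) * csum (fsq F) * (16 * ennreal CR * csum (fsq G))"
proof -
  define P where "P = (\<lambda>k k1. allowed k k1 \<and> \<not> Dres k k1)"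
  define S where "S k \<tau> = csum (\<lambda>k1. if P k k1 then (\<integral>\<^sup>+t. ennreal ((F k1 t / nuS F (mk k) k1)\<^sup>2 * (G (km k k1) (\<tau> - t))\<^sup>2) \<partial>lborel) else 0)" for k \<tau>
  define hat where "hat m k1 = (\<integral>\<^sup>+t. ennreal ((F k1 t / nuS F m k1)\<^sup>2) \<partial>lborel)" for m k1
  define Z where "Z k = csum (\<lambda>k1. hat (mk k) k1 * fsq G (km k k1))" for k
  define C0 where "C0 = ennreal (CJ (2 * b)) * csum (fsq F)"
  have pt: "(Bil P b F G k \<tau>)\<^sup>2 \<le> C0 * ennreal (Lm (mk k)) * S k \<tau>" for k \<tau>
  proof -
    have "(Bil P b F G k \<tau>)\<^sup>2 \<le> csum (\<lambda>k1. if P k k1 then ennreal ((nuS F (mk k) k1)\<^sup>2) * Jk (2 * b) (\<tau> - real_of_int (psiI k k1)) else 0) * S k \<tau>"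
      unfolding S_def
      by (rule GCS[OF Fn Gn Fm Gm]) (auto simp: nuS_def intro: nuS_zero[OF Fm XF])
    also have "csum (\<lambda>k1. if P k k1 then ennreal ((nuS F (mk k) k1)\<^sup>2) * Jk (2 * b) (\<tau> - real_of_int (psiI k k1)) else 0)
        \<le> ennreal (CJ (2 * b)) * ennreal (Lm (mk k)) * csum (fsq F)"
      unfolding P_def by (rule R_kernel[OF HL XF b])
    finally show ?thesis unfolding C0_def by (simp add: mult_right_mono mult_ac)
  qed
  have Sm: "(\<lambda>\<tau>. S k \<tau>) \<in> borel_measurable lborel" for k unfolding S_def by (rule S_meas[OF Fm Gm])
  have Sint: "(\<integral>\<^sup>+\<tau>. S k \<tau> \<partial>lborel) \<le> Z k" for k
  proof -
    have "(\<integral>\<^sup>+\<tau>. S k \<tau> \<partial>lborel) = csum (\<lambda>k1. if P k k1 then (\<integral>\<^sup>+t. ennreal ((F k1 t / nuS F (mk k) k1)\<^sup>2) \<partial>lborel) * fsq G (km k k1) else 0)"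
      unfolding S_def by (rule S_int[OF Fm Gm])
    also have "\<dots> \<le> Z k" unfolding Z_def hat_def by (intro nn_integral_mono) auto
    finally show ?thesis .
  qed
  have "(\<integral>\<^sup>+\<tau>. csum (\<lambda>k. ennreal (w k) * (Bil P b F G k \<tau>)\<^sup>2) \<partial>lborel)
      \<le> (\<integral>\<^sup>+\<tau>. csum (\<lambda>k. (ennreal (w k) * (C0 * ennreal (Lm (mk k)))) * S k \<tau>) \<partial>lborel)"
    by (intro nn_integral_mono) (use pt in \<open>simp add: mult.assoc mult_left_mono\<close>)
  also have "\<dots> = csum (\<lambda>k. \<integral>\<^sup>+\<tau>. (ennreal (w k) * (C0 * ennreal (Lm (mk k)))) * S k \<tau> \<partial>lborel)"
    by (rule swap_csum_int) (use Sm in measurable)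
  also have "\<dots> = csum (\<lambda>k. (ennreal (w k) * (C0 * ennreal (Lm (mk k)))) * (\<integral>\<^sup>+\<tau>. S k \<tau> \<partial>lborel))"
    by (intro nn_integral_cong nn_integral_cmult) (use Sm in auto)
  also have "\<dots> \<le> csum (\<lambda>k. (ennreal (w k) * (C0 * ennreal (Lm (mk k)))) * Z k)"
    by (intro nn_integral_mono mult_left_mono Sint) auto
  also have "\<dots> \<le> csum (\<lambda>k. C0 * (ennreal (Wm (mk k) * Lm (mk k)) * Z k))"
  proof (intro nn_integral_mono)
    fix k
    have "ennreal (w k) * ennreal (Lm (mk k)) \<le> ennreal (Wm (mk k) * Lm (mk k))"
      using HW[of k] Lmn[of "mk k"] wn[of k] by (simp add: ennreal_mult[symmetric] mult_right_mono del: ennreal_mult)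
    hence "ennreal (w k) * ennreal (Lm (mk k)) * (C0 * Z k) \<le> ennreal (Wm (mk k) * Lm (mk k)) * (C0 * Z k)"
      by (rule mult_right_mono) simp
    thus "(ennreal (w k) * (C0 * ennreal (Lm (mk k)))) * Z k \<le> C0 * (ennreal (Wm (mk k) * Lm (mk k)) * Z k)"
      by (simp add: mult_ac)
  qed
  also have "\<dots> = C0 * csum (\<lambda>k. ennreal (Wm (mk k) * Lm (mk k)) * Z k)" by (rule csum_cmult)
  also have "C0 * csum (\<lambda>k. ennreal (Wm (mk k) * Lm (mk k)) * Z k) \<le> C0 * ((16 * csum (fsq G)) * ennreal CR)"
  proof (rule mult_left_mono[OF _ zero_le])
    have "csum (\<lambda>k. ennreal (Wm (mk k) * Lm (mk k)) * Z k)
      = csum (\<lambda>m. csum (\<lambda>k. if mk k = m then ennreal (Wm (mk k) * Lm (mk k)) * Z k else 0))"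
    by (rule regroup)
  also have "\<dots> = csum (\<lambda>m. ennreal (Wm m * Lm m) * csum (\<lambda>k. if mk k = m then Z k else 0))"
    unfolding csum_cmult[symmetric] by (intro nn_integral_cong) auto
  also have "\<dots> \<le> csum (\<lambda>m. ennreal (Wm m * Lm m) * (16 * csum (fsq G)))"
  proof (intro nn_integral_mono mult_left_mono)
    fix m
    have "csum (\<lambda>k. if mk k = m then Z k else 0) = csum (\<lambda>k. if mk k = m then csum (\<lambda>k1. hat m k1 * fsq G (km k k1)) else 0)"
      unfolding Z_def by (intro nn_integral_cong) auto
    also have "\<dots> \<le> 16 * csum (fsq G)"
      unfolding hat_def by (rule Zm_bound[OF Fm XF]) (use HM in auto)
    finally show "csum (\<lambda>k. if mk k = m then Z k else 0) \<le> 16 * csum (fsq G)" .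
  qed auto
  also have "\<dots> = (16 * csum (fsq G)) * csum (\<lambda>m. ennreal (Wm m * Lm m))"
    by (subst csum_cmult[symmetric]) (simp add: mult.commute)
  also have "\<dots> \<le> (16 * csum (fsq G)) * ennreal CR" by (intro mult_left_mono HS) auto
    finally show "csum (\<lambda>k. ennreal (Wm (mk k) * Lm (mk k)) * Z k) \<le> (16 * csum (fsq G)) * ennreal CR" .
  qed
  finally show ?thesis unfolding P_def C0_def by (simp add: mult_left_mono mult_ac)
qed



definition mk :: "ii \<Rightarrow> nat" where
  "mk k = (LEAST m. \<bar>fst k\<bar> \<le> 2 ^ m \<and> \<bar>snd k\<bar> \<le> 2 ^ m)"

lemma mk_ex: fixes k :: ii shows "\<exists>m. \<bar>fst k\<bar> \<le> 2 ^ m \<and> \<bar>snd k\<bar> \<le> (2::int) ^ m"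
proof -
  define n where "n = nat (\<bar>fst k\<bar> + \<bar>snd k\<bar>)"
  have "n < 2 ^ n" by (rule less_exp)
  hence h: "int n \<le> 2 ^ n" by (metis of_nat_less_iff of_nat_numeral of_nat_power less_imp_le)
  have "\<bar>fst k\<bar> \<le> int n" "\<bar>snd k\<bar> \<le> int n" unfolding n_def by auto
  hence "\<bar>fst k\<bar> \<le> 2 ^ n" "\<bar>snd k\<bar> \<le> 2 ^ n" using h by linarith+
  thus ?thesis by blast
qed

lemma mk_le: "\<bar>fst k\<bar> \<le> 2 ^ mk k \<and> \<bar>snd k\<bar> \<le> 2 ^ mk k"
  unfolding mk_def using LeastI_ex[OF mk_ex[of k]] .

lemma jb2_ge: "jb2 a b \<ge> \<bar>real_of_int a\<bar>" "jb2 a b \<ge> \<bar>real_of_int b\<bar>" "jb2 a b \<ge> 1"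
proof -
  have "(real_of_int a)\<^sup>2 \<le> 1 + (real_of_int a)\<^sup>2 + (real_of_int b)\<^sup>2" by simp
  hence "sqrt ((real_of_int a)\<^sup>2) \<le> jb2 a b" unfolding jb2_def by (rule real_sqrt_le_mono)
  thus "jb2 a b \<ge> \<bar>real_of_int a\<bar>" by simp
  have "(real_of_int b)\<^sup>2 \<le> 1 + (real_of_int a)\<^sup>2 + (real_of_int b)\<^sup>2" by simp
  hence "sqrt ((real_of_int b)\<^sup>2) \<le> jb2 a b" unfolding jb2_def by (rule real_sqrt_le_mono)
  thus "jb2 a b \<ge> \<bar>real_of_int b\<bar>" by simp
  have "1 \<le> 1 + (real_of_int a)\<^sup>2 + (real_of_int b)\<^sup>2" by simp
  hence "sqrt 1 \<le> jb2 a b" unfolding jb2_def by (rule real_sqrt_le_mono)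
  thus "jb2 a b \<ge> 1" by simp
qed

lemma mk_lower: "jb2 (fst k) (snd k) \<ge> 2 ^ mk k / 2"
proof (cases "mk k = 0")
  case True
  thus ?thesis using jb2_ge(3)[where a = "fst k" and b = "snd k"] by simp
next
  case False
  hence "mk k - 1 < mk k" by simp
  hence "\<not> (\<bar>fst k\<bar> \<le> 2 ^ (mk k - 1) \<and> \<bar>snd k\<bar> \<le> 2 ^ (mk k - 1))"
    unfolding mk_def by (rule not_less_Least)
  hence "2 ^ (mk k - 1) < \<bar>fst k\<bar> \<or> 2 ^ (mk k - 1) < \<bar>snd k\<bar>" by auto
  hence "real_of_int (2 ^ (mk k - 1)) < real_of_int \<bar>fst k\<bar> \<or> real_of_int (2 ^ (mk k - 1)) < real_of_int \<bar>snd k\<bar>"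
    by (simp only: of_int_less_iff)
  hence "(2::real) ^ (mk k - 1) \<le> \<bar>real_of_int (fst k)\<bar> \<or> (2::real) ^ (mk k - 1) \<le> \<bar>real_of_int (snd k)\<bar>"
    by auto
  hence "(2::real) ^ (mk k - 1) \<le> jb2 (fst k) (snd k)" using jb2_ge[where a = "fst k" and b = "snd k"] by linarith
  moreover have "(2::real) ^ mk k / 2 = 2 ^ (mk k - 1)" using False
    by (metis One_nat_def Suc_pred neq0_conv nonzero_mult_div_cancel_left power_Suc zero_neq_numeral)
  ultimately show ?thesis by simp
qed

lemma csum_geom:
  fixes f :: "nat \<Rightarrow> real"
  assumes f: "\<And>m. f m \<le> K * q ^ m" and q: "0 \<le> q" "q < 1" and K: "K \<ge> 0"
  shows "csum (\<lambda>m. ennreal (f m)) \<le> ennreal (K / (1 - q))"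
proof -
  have "csum (\<lambda>m. ennreal (f m)) \<le> csum (\<lambda>m. ennreal (K * q ^ m))"
    by (intro nn_integral_mono ennreal_leI f)
  also have "\<dots> = (\<Sum>m. ennreal (K * q ^ m))" by (rule nn_integral_count_space_nat)
  also have "\<dots> = ennreal (K / (1 - q))"
  proof (rule suminf_ennreal_eq)
    show "(\<lambda>m. K * q ^ m) sums (K / (1 - q))"
      using sums_mult[OF geometric_sums[of q], of K] q by (simp add: divide_simps)
  qed (use q K in auto)
  finally show ?thesis .
qed


lemma two_pow: "(2::real) ^ m = 2 powr real m"
  by (simp add: powr_realpow)

lemma pow_powr_eq: "((2::real) powr a) ^ m = 2 powr (real m * a)"
  by (metis powr_powr powr_realpow powr_gt_zero mult.commute zero_less_numeral)

lemma geom_ineq1: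
  fixes c g s :: real and m :: nat
  assumes c: "c \<ge> 0" and g: "g \<ge> 0"
  shows "(2 ^ m / 2) powr (2 * s) * (c * (2 ^ (m + 1)) powr g + 2)
     \<le> ((c * 2 powr g + 2) * 2 powr (- 2 * s)) * (2 powr (2 * s + g)) ^ m"
proof -
  define x where "x = real m"
  have x0: "x \<ge> 0" unfolding x_def by simp
  have e1: "(2 ^ m / 2 :: real) = 2 powr (x - 1)" unfolding x_def two_pow by (simp add: powr_diff)
  have e2: "(2 ^ (m + 1) :: real) = 2 powr (x + 1)" unfolding x_def two_pow by (simp add: add.commute)
  define P1 where "P1 = (2::real) powr ((x - 1) * (2 * s))"
  define P2 where "P2 = (2::real) powr ((x + 1) * g)"
  define Qm where "Qm = (2::real) powr (x * (2 * s + g))"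
  have h1: "(2 ^ m / 2) powr (2 * s) = P1" unfolding e1 P1_def by (simp only: powr_powr)
  have h2: "(2 ^ (m + 1)) powr g = P2" unfolding e2 P2_def by (simp only: powr_powr)
  have h3: "(2 powr (2 * s + g)) ^ m = Qm" unfolding Qm_def pow_powr_eq x_def by simp
  have h4: "P1 * P2 = 2 powr g * 2 powr (- 2 * s) * Qm"
  proof -
    have "P1 * P2 = 2 powr ((x - 1) * (2 * s) + (x + 1) * g)" unfolding P1_def P2_def by (simp only: powr_add[symmetric])
    also have "(x - 1) * (2 * s) + (x + 1) * g = g + (- 2 * s) + x * (2 * s + g)" by (simp add: algebra_simps)
    also have "(2::real) powr (g + (- 2 * s) + x * (2 * s + g)) = 2 powr g * 2 powr (- 2 * s) * Qm"
      unfolding Qm_def by (simp only: powr_add)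
    finally show ?thesis .
  qed
  have h5: "P1 \<le> 2 powr (- 2 * s) * Qm"
  proof -
    have "P1 \<le> 2 powr ((- 2 * s) + x * (2 * s + g))" unfolding P1_def
      using x0 g by (intro powr_mono) (auto simp: algebra_simps)
    also have "\<dots> = 2 powr (- 2 * s) * Qm" unfolding Qm_def by (simp only: powr_add)
    finally show ?thesis .
  qed
  have "(2 ^ m / 2) powr (2 * s) * (c * (2 ^ (m + 1)) powr g + 2) = c * (P1 * P2) + 2 * P1"
    unfolding h1 h2 by (simp add: algebra_simps)
  also have "\<dots> \<le> c * (2 powr g * 2 powr (- 2 * s) * Qm) + 2 * (2 powr (- 2 * s) * Qm)"
    unfolding h4 using h5 by simp
  also have "\<dots> = ((c * 2 powr g + 2) * 2 powr (- 2 * s)) * (2 powr (2 * s + g)) ^ m"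
    unfolding h3 by (simp add: algebra_simps)
  finally show ?thesis .
qed

lemma HD_bound:
  fixes g e1 c s :: real and k1 :: ii
  assumes cnt: "\<And>N x0 y0 C. N \<ge> 1 \<Longrightarrow> admissible_curve C \<Longrightarrow> real (card (counted_points (square x0 y0 N) C)) \<le> c * N powr g"
    and c: "c \<ge> 0" and g: "g \<ge> 0" and s: "s \<le> 0" and q: "2 * s + g < 0"
  shows "csum (\<lambda>k. if allowed k k1 \<and> Dres k k1 then ennreal (jb2 (fst k) (snd k) powr (2 * s)) else 0)
     \<le> ennreal (((c * 2 powr g + 2) * 2 powr (- 2 * s)) / (1 - 2 powr (2 * s + g)))"
proof -
  define Y where "Y m = {k. \<bar>fst k\<bar> \<le> 2 ^ m \<and> \<bar>snd k\<bar> \<le> 2 ^ m \<and> Dres k k1 \<and> allowed k k1}" for m :: nat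
  define Wm where "Wm m = ((2::real) ^ m / 2) powr (2 * s)" for m :: nat
  have finY: "finite (Y m)" for m
    by (rule finite_subset[of _ "{- (2 ^ m)..2 ^ m} \<times> {- (2 ^ m)..2 ^ m}"]) (auto simp: Y_def abs_le_iff)
  have cY: "real (card (Y m)) \<le> c * (2 ^ (m + 1)) powr g + 2" for m
  proof -
    have "card (Y m) \<le> card (counted_points (square (real_of_int (2 * fst k1 - 2 ^ m)) (real_of_int (2 * snd k1 - 2 ^ m)) (2 ^ (m + 1)))
          (curve_ii (- 2 * real_of_int (fst k1)) (- 2 * real_of_int (snd k1)))) + 2"
      unfolding Y_def by (rule D_count)
    moreover have "real (card (counted_points (square (real_of_int (2 * fst k1 - 2 ^ m)) (real_of_int (2 * snd k1 - 2 ^ m)) (2 ^ (m + 1)))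
          (curve_ii (- 2 * real_of_int (fst k1)) (- 2 * real_of_int (snd k1))))) \<le> c * (2 ^ (m + 1)) powr g"
    proof (rule cnt)
      have "(1::real) \<le> 2 ^ (m + 1)" by (rule one_le_power) simp
      thus "(1::real) \<le> 2 ^ (m + 1)" .
    qed (auto simp: admissible_curve_def)
    ultimately show ?thesis by linarith
  qed
  have "csum (\<lambda>k. if allowed k k1 \<and> Dres k k1 then ennreal (jb2 (fst k) (snd k) powr (2 * s)) else 0)
      = csum (\<lambda>m. csum (\<lambda>k. if mk k = m then (if allowed k k1 \<and> Dres k k1 then ennreal (jb2 (fst k) (snd k) powr (2 * s)) else 0) else 0))"
    by (rule regroup)
  also have "\<dots> \<le> csum (\<lambda>m. ennreal (Wm m * (c * (2 ^ (m + 1)) powr g + 2)))"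
  proof (intro nn_integral_mono)
    fix m :: nat
    have "csum (\<lambda>k. if mk k = m then (if allowed k k1 \<and> Dres k k1 then ennreal (jb2 (fst k) (snd k) powr (2 * s)) else 0) else 0)
        \<le> csum (\<lambda>k. ennreal (Wm m) * indicator (Y m) k)"
    proof (intro nn_integral_mono)
      fix k
      show "(if mk k = m then (if allowed k k1 \<and> Dres k k1 then ennreal (jb2 (fst k) (snd k) powr (2 * s)) else 0) else 0) \<le> ennreal (Wm m) * indicator (Y m) k"
      proof (cases "mk k = m \<and> allowed k k1 \<and> Dres k k1")
        case True
        have "jb2 (fst k) (snd k) powr (2 * s) \<le> Wm m" unfolding Wm_def
          using mk_lower[of k] True s by (intro powr_mono2') auto
        moreover have "k \<in> Y m" using True mk_le[of k] unfolding Y_def by auto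
        ultimately show ?thesis using True by (simp add: ennreal_leI)
      qed auto
    qed
    also have "\<dots> = ennreal (Wm m) * of_nat (card (Y m))"
      by (subst nn_integral_cmult) (auto simp: finY)
    also have "\<dots> \<le> ennreal (Wm m * (c * (2 ^ (m + 1)) powr g + 2))"
      using cY[of m] by (simp add: ennreal_mult ennreal_of_nat_eq_real_of_nat Wm_def mult_left_mono ennreal_leI del: of_nat_power)
    finally show "csum (\<lambda>k. if mk k = m then (if allowed k k1 \<and> Dres k k1 then ennreal (jb2 (fst k) (snd k) powr (2 * s)) else 0) else 0)
        \<le> ennreal (Wm m * (c * (2 ^ (m + 1)) powr g + 2))" .
  qed
  also have "\<dots> \<le> ennreal (((c * 2 powr g + 2) * 2 powr (- 2 * s)) / (1 - 2 powr (2 * s + g)))"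
  proof (rule csum_geom)
    show "Wm m * (c * (2 ^ (m + 1)) powr g + 2) \<le> ((c * 2 powr g + 2) * 2 powr (- 2 * s)) * (2 powr (2 * s + g)) ^ m" for m
      unfolding Wm_def by (rule geom_ineq1[OF c g])
    show "2 powr (2 * s + g) < 1" using q by (simp add: powr_less_one)
  qed (use c in auto)
  finally show ?thesis .
qed


lemma csum_fin_supp:
  assumes X: "finite X" and h: "\<And>x. h x \<ge> 0"
  shows "csum (\<lambda>x. if x \<in> X then ennreal (h x) else 0) = ennreal (\<Sum>x\<in>X. h x)"
proof -
  have "csum (\<lambda>x. if x \<in> X then ennreal (h x) else 0) = csum (\<lambda>x. ennreal (h x) * indicator X x)"
    by (intro nn_integral_cong) (auto simp: indicator_def)
  also have "\<dots> = (\<integral>\<^sup>+x. ennreal (h x) \<partial>count_space X)"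
    by (simp add: nn_integral_count_space_indicator)
  also have "\<dots> = (\<Sum>x\<in>X. ennreal (h x))" by (rule nn_integral_count_space_finite[OF X])
  also have "\<dots> = ennreal (\<Sum>x\<in>X. h x)" using h by (simp add: sum_ennreal)
  finally show ?thesis .
qed

definition Lm :: "real \<Rightarrow> real \<Rightarrow> real \<Rightarrow> nat \<Rightarrow> real" where
  "Lm c g p m = (1 + 4 / (1 - p)) * ((c * (2 ^ (m + 1)) powr g) powr p * ((2::real) ^ m * 2 ^ m) powr (1 - p))"

lemma HL_bound:
  fixes g c b \<tau> :: real and k j :: ii
  assumes cnt: "\<And>N x0 y0 C. N \<ge> 1 \<Longrightarrow> admissible_curve C \<Longrightarrow> real (card (counted_points (square x0 y0 N) C)) \<le> c * N powr g"
    and c: "c \<ge> 1" and g: "g \<ge> 0" and b: "1/4 < b" "b < 1/2"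
  shows "csum (\<lambda>k1. if idx (mk k) k1 = j \<and> \<not> Dres k k1 then ennreal (jb (\<tau> - real_of_int (psiI k k1)) powr (1 - 4 * b)) else 0)
     \<le> ennreal (Lm c g (4 * b - 1) (mk k))"
proof -
  define m where "m = mk k"
  define M :: int where "M = 2 ^ m"
  define p where "p = 4 * b - 1"
  have p: "0 < p" "p < 1" using b unfolding p_def by auto
  have M1: "M \<ge> 1" unfolding M_def by simp
  define X where "X = {k1 \<in> Tile M j. \<not> Dres k k1}"
  have Xeq: "(idx m k1 = j \<and> \<not> Dres k k1) \<longleftrightarrow> k1 \<in> X" for k1
    unfolding X_def Tile_def idx_def M_def by auto
  have finX: "finite X" unfolding X_def using Tile_fin[of M j] M1 by auto
  define A where "A = c * (real_of_int (2 * M)) powr g"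
  define P where "P = (2::real) ^ m * 2 ^ m"
  have A1: "A \<ge> 1"
  proof -
    have "1 \<le> real_of_int (2 * M)" using M1 by simp
    hence "1 \<le> real_of_int (2 * M) powr g" using g by (simp add: ge_one_powr_ge_zero)
    hence "1 * 1 \<le> c * real_of_int (2 * M) powr g" using c by (intro mult_mono) auto
    thus ?thesis unfolding A_def by simp
  qed
  have lev: "real (card {x\<in>X. psiI k x = n}) \<le> A" for n
  proof -
    have seq: "{x\<in>X. psiI k x = n} = {k1 \<in> Tile M j. \<not> Dres k k1 \<and> psiI k k1 = n}" unfolding X_def by auto
    define cc where "cc = (4 * real_of_int n - real_of_int (phiI k)) / 3"
    show ?thesis
    proof (cases "cc = 0")
      case True
      have E: "{k1 \<in> Tile M j. \<not> Dres k k1 \<and> psiI k k1 = n} = {}"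
      proof (rule ccontr)
        assume "{k1 \<in> Tile M j. \<not> Dres k k1 \<and> psiI k k1 = n} \<noteq> {}"
        then obtain k1 where k1: "\<not> Dres k k1" "psiI k k1 = n" by auto
        have "4 * psiI k k1 = phiI k + 3 * QF k (Wv k k1)" by (rule psi_id)
        hence "real_of_int (4 * n) = real_of_int (phiI k) + 3 * real_of_int (QF k (Wv k k1))" using k1(2)
          by (metis of_int_add of_int_mult of_int_numeral)
        hence "real_of_int (QF k (Wv k k1)) = cc" unfolding cc_def by simp
        thus False using True k1(1) unfolding Dres_def by simp
      qed
      show ?thesis unfolding seq E using A1 by simp
    next
      case False
      have "card {k1 \<in> Tile M j. \<not> Dres k k1 \<and> psiI k k1 = n}
         \<le> card (counted_points (square (real_of_int (2 * M * fst j - fst k)) (real_of_int (2 * M * snd j - snd k)) (real_of_int (2 * M)))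
              (curve_i (real_of_int (fst k)) (- real_of_int (snd k)) ((4 * real_of_int n - real_of_int (phiI k)) / 3)))"
        by (rule R_count[OF M1])
      also have "real \<dots> \<le> A" unfolding A_def
      proof (rule cnt)
        show "1 \<le> real_of_int (2 * M)" using M1 by simp
        have "(4 * real_of_int n - real_of_int (phiI k)) / 3 \<noteq> 0" using False unfolding cc_def .
        thus "admissible_curve (curve_i (real_of_int (fst k)) (- real_of_int (snd k)) ((4 * real_of_int n - real_of_int (phiI k)) / 3))"
          unfolding admissible_curve_def by blast
      qed
      finally show ?thesis using seq by simp
    qed
  qed
  have cX: "real (card X) \<le> P"
  proof -
    have "card X \<le> card (Tile M j)" unfolding X_def using Tile_fin[of M j] M1 by (intro card_mono) auto
    also have "\<dots> = nat M * nat M" using Tile_card[of M j] M1 by simp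
    finally have "real (card X) \<le> real (nat M * nat M)" by (simp only: of_nat_le_iff)
    also have "\<dots> = P" unfolding P_def M_def by (simp add: nat_power_eq)
    finally show ?thesis .
  qed
  have "csum (\<lambda>k1. if idx (mk k) k1 = j \<and> \<not> Dres k k1 then ennreal (jb (\<tau> - real_of_int (psiI k k1)) powr (1 - 4 * b)) else 0)
      = csum (\<lambda>k1. if k1 \<in> X then ennreal (jb (\<tau> - real_of_int (psiI k k1)) powr (- p)) else 0)"
    unfolding m_def[symmetric] p_def by (intro nn_integral_cong) (auto simp: Xeq)
  also have "\<dots> = ennreal (\<Sum>k1\<in>X. jb (\<tau> - real_of_int (psiI k k1)) powr (- p))"
    by (rule csum_fin_supp[OF finX]) simp
  also have "\<dots> \<le> ennreal ((1 + 4 / (1 - p)) * (A powr p * P powr (1 - p)))"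
    by (intro ennreal_leI level_sum[OF finX lev cX A1 p])
  also have "(1 + 4 / (1 - p)) * (A powr p * P powr (1 - p)) = Lm c g (4 * b - 1) (mk k)"
    unfolding Lm_def A_def P_def p_def m_def[symmetric] M_def by simp
  finally show ?thesis .
qed


lemma HS_bound:
  fixes c g p s :: real
  assumes c: "c \<ge> 1" and g: "g \<ge> 0" and p: "0 < p" "p < 1" and q: "2 * s + g + 2 * (1 - p) < 0"
  shows "csum (\<lambda>m. ennreal ((2 ^ m / 2) powr (2 * s) * Lm c g p m))
     \<le> ennreal (((1 + 4 / (1 - p)) * c * 2 powr (g - 2 * s)) / (1 - 2 powr (2 * s + g + 2 * (1 - p))))"
proof (rule csum_geom)
  fix m :: nat
  define x where "x = real m"
  have e1: "(2 ^ m / 2 :: real) = 2 powr (x - 1)" unfolding x_def two_pow by (simp add: powr_diff)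
  have e2: "(2 ^ (m + 1) :: real) = 2 powr (x + 1)" unfolding x_def two_pow by (simp add: add.commute)
  have e3: "((2::real) ^ m * 2 ^ m) = 2 powr (2 * x)" unfolding x_def two_pow by (simp add: powr_add[symmetric])
  define A where "A = c * (2 ^ (m + 1)) powr g"
  have A1: "A \<ge> 1"
  proof -
    have "1 \<le> (2::real) ^ (m + 1)" by (rule one_le_power) simp
    hence "1 \<le> ((2::real) ^ (m + 1)) powr g" using g by (simp add: ge_one_powr_ge_zero)
    hence "1 * 1 \<le> c * (2 ^ (m + 1)) powr g" using c by (intro mult_mono) auto
    thus ?thesis unfolding A_def by simp
  qed
  have Ap: "A powr p \<le> A" using powr_mono[of p 1 A] A1 p by simp
  define C where "C = 1 + 4 / (1 - p)"
  have C0: "C \<ge> 0" unfolding C_def using p by simp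
  have "(2 ^ m / 2) powr (2 * s) * Lm c g p m = (2 ^ m / 2) powr (2 * s) * (C * (A powr p * ((2::real) ^ m * 2 ^ m) powr (1 - p)))"
    unfolding Lm_def C_def A_def by simp
  also have "\<dots> \<le> (2 ^ m / 2) powr (2 * s) * (C * (A * ((2::real) ^ m * 2 ^ m) powr (1 - p)))"
    using Ap C0 by (intro mult_left_mono mult_right_mono) auto
  also have "\<dots> = C * c * (2 powr ((x - 1) * (2 * s)) * 2 powr ((x + 1) * g) * 2 powr ((2 * x) * (1 - p)))"
    unfolding A_def e1 e2 e3 by (simp add: powr_powr)
  also have "2 powr ((x - 1) * (2 * s)) * 2 powr ((x + 1) * g) * 2 powr ((2 * x) * (1 - p))
      = (2::real) powr ((x - 1) * (2 * s) + (x + 1) * g + (2 * x) * (1 - p))" by (simp only: powr_add[symmetric])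
  also have "(x - 1) * (2 * s) + (x + 1) * g + (2 * x) * (1 - p) = (g - 2 * s) + x * (2 * s + g + 2 * (1 - p))"
    by (simp add: algebra_simps)
  also have "(2::real) powr ((g - 2 * s) + x * (2 * s + g + 2 * (1 - p))) = 2 powr (g - 2 * s) * (2 powr (2 * s + g + 2 * (1 - p))) ^ m"
    unfolding pow_powr_eq x_def by (simp only: powr_add)
  finally show "(2 ^ m / 2) powr (2 * s) * Lm c g p m \<le> ((1 + 4 / (1 - p)) * c * 2 powr (g - 2 * s)) * (2 powr (2 * s + g + 2 * (1 - p))) ^ m"
    unfolding C_def by (simp add: mult_ac)
next
  show "2 powr (2 * s + g + 2 * (1 - p)) < 1" using q by (simp add: powr_less_one)
qed (use c p in auto)


lemma Bil_meas:
  assumes Fm: "\<And>k. F k \<in> borel_measurable borel" and Gm: "\<And>k. G k \<in> borel_measurable borel"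
  shows "(\<lambda>\<tau>. Bil P b F G k \<tau>) \<in> borel_measurable lborel"
  unfolding Bil_def
proof (rule meas_csum)
  fix k1
  show "(\<lambda>\<tau>. \<integral>\<^sup>+t. (if P k k1 then ennreal (F k1 t * Kf b (t - phk k1) * G (km k k1) (\<tau> - t) * Kf b (\<tau> - t - phk (km k k1))) else 0) \<partial>lborel) \<in> borel_measurable lborel"
    using Fm[of k1] Gm[of "km k k1"] by measurable
qed

lemma Bil_split:
  assumes Fm: "\<And>k. F k \<in> borel_measurable borel" and Gm: "\<And>k. G k \<in> borel_measurable borel"
  shows "Bil allowed b F G k \<tau> = Bil (\<lambda>k k1. allowed k k1 \<and> Dres k k1) b F G k \<tau> + Bil (\<lambda>k k1. allowed k k1 \<and> \<not> Dres k k1) b F G k \<tau>"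
proof -
  define X where "X k1 t = ennreal (F k1 t * Kf b (t - phk k1) * G (km k k1) (\<tau> - t) * Kf b (\<tau> - t - phk (km k k1)))" for k1 t
  have Xm: "X k1 \<in> borel_measurable lborel" for k1 unfolding X_def using Fm[of k1] Gm[of "km k k1"] by measurable
  have "Bil allowed b F G k \<tau> = csum (\<lambda>k1. \<integral>\<^sup>+t. (if allowed k k1 \<and> Dres k k1 then X k1 t else 0) + (if allowed k k1 \<and> \<not> Dres k k1 then X k1 t else 0) \<partial>lborel)"
    unfolding Bil_def X_def by (intro nn_integral_cong) auto
  also have "\<dots> = csum (\<lambda>k1. (\<integral>\<^sup>+t. (if allowed k k1 \<and> Dres k k1 then X k1 t else 0) \<partial>lborel) + (\<integral>\<^sup>+t. (if allowed k k1 \<and> \<not> Dres k k1 then X k1 t else 0) \<partial>lborel))"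
    by (intro nn_integral_cong nn_integral_add) (use Xm in auto)
  also have "\<dots> = csum (\<lambda>k1. \<integral>\<^sup>+t. (if allowed k k1 \<and> Dres k k1 then X k1 t else 0) \<partial>lborel) + csum (\<lambda>k1. \<integral>\<^sup>+t. (if allowed k k1 \<and> \<not> Dres k k1 then X k1 t else 0) \<partial>lborel)"
    by (rule nn_integral_add) auto
  finally show ?thesis unfolding Bil_def X_def .
qed

lemma sq_sum_le: "((x::ennreal) + y)\<^sup>2 \<le> 2 * x\<^sup>2 + 2 * y\<^sup>2"
proof -
  have "(x + y)\<^sup>2 = x\<^sup>2 + 2 * x * y + y\<^sup>2" by (simp add: power2_sum add_ac)
  also have "\<dots> \<le> x\<^sup>2 + (x\<^sup>2 + y\<^sup>2) + y\<^sup>2" using sum_of_squares_ge_ennreal[of x y] by (intro add_mono) auto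
  also have "\<dots> = 2 * x\<^sup>2 + 2 * y\<^sup>2" by (simp add: algebra_simps mult_2)
  finally show ?thesis .
qed

lemma Main_abs:
  fixes F G :: "ii \<Rightarrow> real \<Rightarrow> real" and w :: "ii \<Rightarrow> real" and b CD CR :: real
    and mk' :: "ii \<Rightarrow> nat" and Lm' Wm :: "nat \<Rightarrow> real"
  assumes Fn: "\<And>k t. F k t \<ge> 0" and Gn: "\<And>k t. G k t \<ge> 0"
    and Fm: "\<And>k. F k \<in> borel_measurable borel" and Gm: "\<And>k. G k \<in> borel_measurable borel"
    and XF: "csum (fsq F) < \<infinity>" and XG: "csum (fsq G) < \<infinity>"
    and b: "1/4 < b" "b < 1/2" and wn: "\<And>k. w k \<ge> 0"
    and HD: "\<And>k1. csum (\<lambda>k. if allowed k k1 \<and> Dres k k1 then ennreal (w k) else 0) \<le> ennreal CD"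
    and HM: "\<And>k. \<bar>fst k\<bar> \<le> 2 ^ mk' k \<and> \<bar>snd k\<bar> \<le> 2 ^ mk' k"
    and HL: "\<And>k \<tau> j. csum (\<lambda>k1. if idx (mk' k) k1 = j \<and> \<not> Dres k k1 then ennreal (jb (\<tau> - real_of_int (psiI k k1)) powr (1 - 4 * b)) else 0) \<le> ennreal (Lm' (mk' k))"
    and Lmn: "\<And>m. Lm' m \<ge> 0"
    and HW: "\<And>k. w k \<le> Wm (mk' k)"
    and HS: "csum (\<lambda>m::nat. ennreal (Wm m * Lm' m)) \<le> ennreal CR"
  shows "(\<integral>\<^sup>+\<tau>. csum (\<lambda>k. ennreal (w k) * (Bil allowed b F G k \<tau>)\<^sup>2) \<partial>lborel)
     \<le> 2 * (ennreal (CJ (2 * b)) * ennreal CD * csum (fsq F) * csum (fsq G)) + 2 * (ennreal (CJ (2 * b)) * csum (fsq F) * (16 * ennreal CR * csum (fsq G)))"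
proof -
  let ?PD = "\<lambda>k k1. allowed k k1 \<and> Dres k k1"
  let ?PR = "\<lambda>k k1. allowed k k1 \<and> \<not> Dres k k1"
  have mD: "(\<lambda>\<tau>. csum (\<lambda>k. ennreal (w k) * (Bil ?PD b F G k \<tau>)\<^sup>2)) \<in> borel_measurable lborel"
    by (rule meas_csum) (use Bil_meas[OF Fm Gm] in measurable)
  have mR: "(\<lambda>\<tau>. csum (\<lambda>k. ennreal (w k) * (Bil ?PR b F G k \<tau>)\<^sup>2)) \<in> borel_measurable lborel"
    by (rule meas_csum) (use Bil_meas[OF Fm Gm] in measurable)
  have "(\<integral>\<^sup>+\<tau>. csum (\<lambda>k. ennreal (w k) * (Bil allowed b F G k \<tau>)\<^sup>2) \<partial>lborel)
      \<le> (\<integral>\<^sup>+\<tau>. 2 * csum (\<lambda>k. ennreal (w k) * (Bil ?PD b F G k \<tau>)\<^sup>2) + 2 * csum (\<lambda>k. ennreal (w k) * (Bil ?PR b F G k \<tau>)\<^sup>2) \<partial>lborel)"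
  proof (intro nn_integral_mono)
    fix \<tau>
    have "csum (\<lambda>k. ennreal (w k) * (Bil allowed b F G k \<tau>)\<^sup>2) \<le> csum (\<lambda>k. 2 * (ennreal (w k) * (Bil ?PD b F G k \<tau>)\<^sup>2) + 2 * (ennreal (w k) * (Bil ?PR b F G k \<tau>)\<^sup>2))"
    proof (intro nn_integral_mono)
      fix k
      have "ennreal (w k) * (Bil allowed b F G k \<tau>)\<^sup>2 \<le> ennreal (w k) * (2 * (Bil ?PD b F G k \<tau>)\<^sup>2 + 2 * (Bil ?PR b F G k \<tau>)\<^sup>2)"
        unfolding Bil_split[OF Fm Gm, where b = b and k = k and \<tau> = \<tau>] by (intro mult_left_mono sq_sum_le) auto
      thus "ennreal (w k) * (Bil allowed b F G k \<tau>)\<^sup>2 \<le> 2 * (ennreal (w k) * (Bil ?PD b F G k \<tau>)\<^sup>2) + 2 * (ennreal (w k) * (Bil ?PR b F G k \<tau>)\<^sup>2)"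
        by (simp add: algebra_simps)
    qed
    also have "\<dots> = 2 * csum (\<lambda>k. ennreal (w k) * (Bil ?PD b F G k \<tau>)\<^sup>2) + 2 * csum (\<lambda>k. ennreal (w k) * (Bil ?PR b F G k \<tau>)\<^sup>2)"
      by (simp add: nn_integral_add csum_cmult)
    finally show "csum (\<lambda>k. ennreal (w k) * (Bil allowed b F G k \<tau>)\<^sup>2) \<le> 2 * csum (\<lambda>k. ennreal (w k) * (Bil ?PD b F G k \<tau>)\<^sup>2) + 2 * csum (\<lambda>k. ennreal (w k) * (Bil ?PR b F G k \<tau>)\<^sup>2)" .
  qed
  also have "\<dots> = 2 * (\<integral>\<^sup>+\<tau>. csum (\<lambda>k. ennreal (w k) * (Bil ?PD b F G k \<tau>)\<^sup>2) \<partial>lborel) + 2 * (\<integral>\<^sup>+\<tau>. csum (\<lambda>k. ennreal (w k) * (Bil ?PR b F G k \<tau>)\<^sup>2) \<partial>lborel)"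
    using mD mR by (simp add: nn_integral_add nn_integral_cmult)
  also have "\<dots> \<le> 2 * (ennreal (CJ (2 * b)) * ennreal CD * csum (fsq F) * csum (fsq G)) + 2 * (ennreal (CJ (2 * b)) * csum (fsq F) * (16 * ennreal CR * csum (fsq G)))"
    by (intro add_mono mult_left_mono TD[OF Fn Gn Fm Gm XF XG b wn HD] TR[OF Fn Gn Fm Gm XF XG b wn HM HL Lmn HW HS]) auto
  finally show ?thesis .
qed



definition Fd :: "real \<Rightarrow> stfun \<Rightarrow> ii \<Rightarrow> real \<Rightarrow> real" where
  "Fd b u k t = jb (t - phk k) powr b * cmod (u (fst k) (snd k) t)"

lemma Fd_nonneg: "Fd b u k t \<ge> 0" unfolding Fd_def by simp

lemma Fd_meas:
  assumes "inX 0 b u"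
  shows "Fd b u k \<in> borel_measurable borel"
proof -
  have m: "(\<lambda>t. u (fst k) (snd k) t) \<in> borel_measurable borel" using assms unfolding inX_def by simp
  show ?thesis unfolding Fd_def using m by measurable
qed

lemma Fd_K: "Fd b u k t * Kf b (t - phk k) = cmod (u (fst k) (snd k) t)"
proof -
  have "jb (t - phk k) powr b * jb (t - phk k) powr (- b) = 1"
    using jb_pos[of "t - phk k"] by (simp add: powr_add[symmetric])
  thus ?thesis unfolding Fd_def Kf_def by (simp add: algebra_simps)
qed

lemma phi_phk: "phi (fst k) (snd k) = phk k"
  unfolding phk_def using phi_eq[of "fst k" "snd k"] by simp

lemma Xsq_eq:
  assumes "inX 0 b u"
  shows "Xsq 0 b u = csum (fsq (Fd b u))"
proof -
  have m: "\<And>k. (\<lambda>t. u (fst k) (snd k) t) \<in> borel_measurable borel" using assms unfolding inX_def by simp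
  have e: "ennreal ((jb (tau - phi (fst k) (snd k)) powr (2 * b)) * (jb2 (fst k) (snd k) powr (2 * 0)) * (cmod (u (fst k) (snd k) tau))\<^sup>2)
      = ennreal ((Fd b u k tau)\<^sup>2)" for k tau
  proof -
    have "jb2 (fst k) (snd k) \<noteq> 0" using jb2_ge(3)[where a = "fst k" and b = "snd k"] by auto
    hence "jb2 (fst k) (snd k) powr (2 * 0) = 1" by simp
    moreover have "(jb (tau - phk k) powr b)\<^sup>2 = jb (tau - phk k) powr (2 * b)"
      unfolding power2_eq_square by (simp add: powr_add[symmetric])
    ultimately show ?thesis unfolding Fd_def phi_phk by (simp add: power_mult_distrib)
  qed
  have "Xsq 0 b u = (\<integral>\<^sup>+tau. csum (\<lambda>k. ennreal ((Fd b u k tau)\<^sup>2)) \<partial>lborel)"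
    unfolding Xsq_def e ..
  also have "\<dots> = csum (\<lambda>k. \<integral>\<^sup>+tau. ennreal ((Fd b u k tau)\<^sup>2) \<partial>lborel)"
    by (rule swap_csum_int) (use Fd_meas[OF assms] in measurable)
  finally show ?thesis unfolding fsq_def .
qed


lemma infsum_le_csum:
  fixes n :: "'a::countable \<Rightarrow> real"
  assumes S: "n summable_on UNIV" and nn: "\<And>x. n x \<ge> 0"
  shows "ennreal (infsum n UNIV) \<le> csum (\<lambda>x. ennreal (n x))"
proof (cases "csum (\<lambda>x. ennreal (n x)) = \<infinity>")
  case True thus ?thesis by simp
next
  case False
  define B where "B = enn2real (csum (\<lambda>x. ennreal (n x)))"
  have eB: "csum (\<lambda>x. ennreal (n x)) = ennreal B" unfolding B_def using False by (simp add: ennreal_enn2real_if)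
  have "infsum n UNIV \<le> B"
  proof (rule infsum_le_finite_sums[OF S])
    fix F :: "'a set" assume F: "finite F"
    have "ennreal (sum n F) = (\<Sum>x\<in>F. ennreal (n x))" using nn by (simp add: sum_ennreal)
    also have "\<dots> = (\<integral>\<^sup>+x. ennreal (n x) \<partial>count_space F)" by (rule nn_integral_count_space_finite[OF F, symmetric])
    also have "\<dots> = csum (\<lambda>x. ennreal (n x) * indicator F x)" by (simp add: nn_integral_count_space_indicator)
    also have "\<dots> \<le> csum (\<lambda>x. ennreal (n x))" by (intro nn_integral_mono) (auto simp: indicator_def)
    finally have "ennreal (sum n F) \<le> ennreal B" unfolding eB .
    moreover have "B \<ge> 0" unfolding B_def by simp
    ultimately show "sum n F \<le> B" by (simp add: ennreal_le_iff)
  qed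
  hence "ennreal (infsum n UNIV) \<le> ennreal B" by (rule ennreal_leI)
  thus ?thesis unfolding eB .
qed

lemma Q_bound:
  shows "ennreal (cmod (Q u v xi eta \<tau>)) \<le> csum (\<lambda>k1. \<integral>\<^sup>+t. (if allowed (xi, eta) k1 then ennreal (cmod (u (fst k1) (snd k1) t) * cmod (v (xi - fst k1) (eta - snd k1) (\<tau> - t))) else 0) \<partial>lborel)"
proof -
  define g where "g = (\<lambda>(xi1, eta1). LINT tau1|lborel. (if xi = 0 \<and> xi1 = 0 then 0 else 1) * u xi1 eta1 tau1 * v (xi - xi1) (eta - eta1) (\<tau> - tau1))"
  have Qg: "Q u v xi eta \<tau> = infsum g UNIV" unfolding Q_def g_def by simp
  have A: "ennreal (cmod (g k1)) \<le> (\<integral>\<^sup>+t. (if allowed (xi, eta) k1 then ennreal (cmod (u (fst k1) (snd k1) t) * cmod (v (xi - fst k1) (eta - snd k1) (\<tau> - t))) else 0) \<partial>lborel)" for k1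
  proof -
    obtain xi1 eta1 where k1: "k1 = (xi1, eta1)" by (cases k1)
    define f where "f tau1 = (if xi = 0 \<and> xi1 = 0 then 0 else 1) * u xi1 eta1 tau1 * v (xi - xi1) (eta - eta1) (\<tau> - tau1)" for tau1
    have gk: "g k1 = integral\<^sup>L lborel f" unfolding g_def f_def k1 by simp
    have nf: "ennreal (norm (f t)) = (if allowed (xi, eta) k1 then ennreal (cmod (u (fst k1) (snd k1) t) * cmod (v (xi - fst k1) (eta - snd k1) (\<tau> - t))) else 0)" for t
      unfolding f_def k1 allowed_def by (simp add: norm_mult)
    show ?thesis
    proof (cases "integrable lborel f")
      case True
      have "ennreal (cmod (g k1)) \<le> (\<integral>\<^sup>+t. norm (f t) \<partial>lborel)"
        unfolding gk by (rule integral_norm_bound_ennreal[OF True])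
      thus ?thesis unfolding nf .
    next
      case False
      thus ?thesis unfolding gk by (simp add: not_integrable_integral_eq)
    qed
  qed
  show ?thesis
  proof (cases "g summable_on UNIV")
    case True
    hence AS: "Infinite_Sum.abs_summable_on g UNIV" using summable_on_iff_abs_summable_on_complex by blast
    have "cmod (infsum g UNIV) \<le> infsum (\<lambda>x. cmod (g x)) UNIV" by (rule norm_infsum_bound[OF AS])
    hence "ennreal (cmod (infsum g UNIV)) \<le> ennreal (infsum (\<lambda>x. cmod (g x)) UNIV)" by (rule ennreal_leI)
    also have "\<dots> \<le> csum (\<lambda>x. ennreal (cmod (g x)))"
      by (rule infsum_le_csum) (use AS in auto)
    also have "\<dots> \<le> csum (\<lambda>k1. \<integral>\<^sup>+t. (if allowed (xi, eta) k1 then ennreal (cmod (u (fst k1) (snd k1) t) * cmod (v (xi - fst k1) (eta - snd k1) (\<tau> - t))) else 0) \<partial>lborel)"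
      by (intro nn_integral_mono A)
    finally show ?thesis unfolding Qg .
  next
    case False
    thus ?thesis unfolding Qg by (simp add: infsum_not_exists)
  qed
qed


lemma Q_Bil:
  "ennreal (cmod (Q u v (fst k) (snd k) \<tau>)) \<le> Bil allowed b (Fd b u) (Fd b v) k \<tau>"
proof -
  have "Bil allowed b (Fd b u) (Fd b v) k \<tau> = csum (\<lambda>k1. \<integral>\<^sup>+t. (if allowed (fst k, snd k) k1 then ennreal (cmod (u (fst k1) (snd k1) t) * cmod (v (fst k - fst k1) (snd k - snd k1) (\<tau> - t))) else 0) \<partial>lborel)"
    unfolding Bil_def
  proof (intro nn_integral_cong)
    fix k1 t
    have "Fd b u k1 t * Kf b (t - phk k1) * Fd b v (km k k1) (\<tau> - t) * Kf b (\<tau> - t - phk (km k k1))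
        = (Fd b u k1 t * Kf b (t - phk k1)) * (Fd b v (km k k1) (\<tau> - t) * Kf b (\<tau> - t - phk (km k k1)))" by (simp add: mult_ac)
    also have "\<dots> = cmod (u (fst k1) (snd k1) t) * cmod (v (fst k - fst k1) (snd k - snd k1) (\<tau> - t))"
      unfolding Fd_K by (simp add: km_def)
    finally show "(if allowed k k1 then ennreal (Fd b u k1 t * Kf b (t - phk k1) * Fd b v (km k k1) (\<tau> - t) * Kf b (\<tau> - t - phk (km k k1))) else 0)
      = (if allowed (fst k, snd k) k1 then ennreal (cmod (u (fst k1) (snd k1) t) * cmod (v (fst k - fst k1) (snd k - snd k1) (\<tau> - t))) else 0)"
      by simp
  qed
  thus ?thesis using Q_bound[of u v "fst k" "snd k" \<tau>] by simp
qed

lemma L2H_bound: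
  "L2Hsq s (Q u v) \<le> (\<integral>\<^sup>+\<tau>. csum (\<lambda>k. ennreal (jb2 (fst k) (snd k) powr (2 * s)) * (Bil allowed b (Fd b u) (Fd b v) k \<tau>)\<^sup>2) \<partial>lborel)"
  unfolding L2Hsq_def
proof (intro nn_integral_mono)
  fix \<tau> k
  have "ennreal (jb2 (fst k) (snd k) powr (2 * s) * (cmod (Q u v (fst k) (snd k) \<tau>))\<^sup>2)
      = ennreal (jb2 (fst k) (snd k) powr (2 * s)) * (ennreal (cmod (Q u v (fst k) (snd k) \<tau>)))\<^sup>2"
    by (simp add: ennreal_mult ennreal_power)
  also have "\<dots> \<le> ennreal (jb2 (fst k) (snd k) powr (2 * s)) * (Bil allowed b (Fd b u) (Fd b v) k \<tau>)\<^sup>2"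
    by (intro mult_left_mono power_mono_ennreal Q_Bil) auto
  finally show "ennreal (jb2 (fst k) (snd k) powr (2 * s) * (cmod (Q u v (fst k) (snd k) \<tau>))\<^sup>2)
      \<le> ennreal (jb2 (fst k) (snd k) powr (2 * s)) * (Bil allowed b (Fd b u) (Fd b v) k \<tau>)\<^sup>2" .
qed



theorem mainTheorem5:
  fixes gamma :: real
  assumes "0 \<le> gamma" and "gamma < 1" and "counting_hyp gamma"
  shows "\<forall>eps>0. \<exists>b. 0 < b \<and> b < 1/2 \<and> (\<exists>C::real. \<forall>u v.
           inX 0 b u \<longrightarrow> inX 0 b v \<longrightarrow>
           L2Hsq (- gamma / 2 - eps) (Q u v) \<le> ennreal (C\<^sup>2) * Xsq 0 b u * Xsq 0 b v)"
proof (intro allI impI)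
  fix eps :: real assume eps: "eps > 0"
  have g0: "0 \<le> gamma" and g1: "gamma < 1" using assms by auto
  define e1 where "e1 = min eps 1 / 4"
  have e1: "0 < e1" "e1 \<le> 1/4" "e1 \<le> eps / 4" unfolding e1_def using eps by auto
  obtain c0 where c0: "\<And>N x0 y0 C. N \<ge> 1 \<Longrightarrow> admissible_curve C \<Longrightarrow> real (card (counted_points (square x0 y0 N) C)) \<le> c0 * N powr (gamma + e1)"
  proof -
    have H: "\<forall>eps>0. \<exists>c. \<forall>N::real. N \<ge> 1 \<longrightarrow>
       (\<forall>x0 y0 C. admissible_curve C \<longrightarrow> real (card (counted_points (square x0 y0 N) C)) \<le> c * N powr (gamma + eps))"
      using assms(3) unfolding counting_hyp_def .
    from H[rule_format, OF e1(1)] obtain c0 where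
      "\<forall>N::real. N \<ge> 1 \<longrightarrow> (\<forall>x0 y0 C. admissible_curve C \<longrightarrow> real (card (counted_points (square x0 y0 N) C)) \<le> c0 * N powr (gamma + e1))"
      by blast
    thus ?thesis using that by blast
  qed
  define c where "c = max c0 1"
  define g where "g = gamma + e1"
  have c1: "c \<ge> 1" unfolding c_def by simp
  have g0': "g \<ge> 0" unfolding g_def using g0 e1 by simp
  have cnt: "\<And>N x0 y0 C. N \<ge> 1 \<Longrightarrow> admissible_curve C \<Longrightarrow> real (card (counted_points (square x0 y0 N) C)) \<le> c * N powr g"
  proof -
    fix N x0 y0 C assume N: "N \<ge> (1::real)" and C: "admissible_curve C"
    have "real (card (counted_points (square x0 y0 N) C)) \<le> c0 * N powr (gamma + e1)" by (rule c0[OF N C])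
    also have "\<dots> \<le> c * N powr g" unfolding c_def g_def by (intro mult_right_mono) auto
    finally show "real (card (counted_points (square x0 y0 N) C)) \<le> c * N powr g" .
  qed
  define b where "b = 1/2 - e1 / 16"
  have b: "1/4 < b" "b < 1/2" unfolding b_def using e1 by auto
  define p where "p = 4 * b - 1"
  have p: "0 < p" "p < 1" "1 - p = e1 / 4" unfolding p_def b_def using e1 by auto
  define s where "s = - gamma / 2 - eps"
  have s0: "s \<le> 0" unfolding s_def using g0 eps by simp
  have qD: "2 * s + g < 0" unfolding s_def g_def using e1 eps by simp
  have qR: "2 * s + g + 2 * (1 - p) < 0" unfolding s_def g_def using e1 eps p(3) by simp
  define CD where "CD = ((c * 2 powr g + 2) * 2 powr (- 2 * s)) / (1 - 2 powr (2 * s + g))"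
  define CR where "CR = ((1 + 4 / (1 - p)) * c * 2 powr (g - 2 * s)) / (1 - 2 powr (2 * s + g + 2 * (1 - p)))"
  have CD0: "CD \<ge> 0"
  proof -
    have "2 powr (2 * s + g) < 1" using qD by (simp add: powr_less_one)
    thus ?thesis unfolding CD_def using c1 by (intro divide_nonneg_pos) auto
  qed
  have CR0: "CR \<ge> 0"
  proof -
    have "2 powr (2 * s + g + 2 * (1 - p)) < 1" using qR by (simp add: powr_less_one)
    thus ?thesis unfolding CR_def using c1 p(1) p(2) by (intro divide_nonneg_pos) auto
  qed
  have a: "1/2 < 2 * b" "2 * b < 1" using b by auto
  define C2 where "C2 = 2 * CJ (2 * b) * CD + 32 * CJ (2 * b) * CR"
  have C20: "C2 \<ge> 0" unfolding C2_def using CJ_pos[OF a] CD0 CR0 by simp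
  show "\<exists>b. 0 < b \<and> b < 1/2 \<and> (\<exists>C::real. \<forall>u v.
           inX 0 b u \<longrightarrow> inX 0 b v \<longrightarrow>
           L2Hsq (- gamma / 2 - eps) (Q u v) \<le> ennreal (C\<^sup>2) * Xsq 0 b u * Xsq 0 b v)"
  proof (intro exI conjI allI impI)
    show "0 < b" "b < 1/2" using b by auto
    fix u v assume u: "inX 0 b u" and v: "inX 0 b v"
    define w where "w k = jb2 (fst k) (snd k) powr (2 * s)" for k :: ii
    have XF: "csum (fsq (Fd b u)) < \<infinity>" using u Xsq_eq[OF u] unfolding inX_def by simp
    have XG: "csum (fsq (Fd b v)) < \<infinity>" using v Xsq_eq[OF v] unfolding inX_def by simp
    have HD: "\<And>k1. csum (\<lambda>k. if allowed k k1 \<and> Dres k k1 then ennreal (w k) else 0) \<le> ennreal CD"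
    proof -
      fix k1
      have c0': "c \<ge> 0" using c1 by simp
      show "csum (\<lambda>k. if allowed k k1 \<and> Dres k k1 then ennreal (w k) else 0) \<le> ennreal CD"
        unfolding w_def CD_def by (rule HD_bound[OF cnt c0' g0' s0 qD])
    qed
    have HL: "\<And>k \<tau> j. csum (\<lambda>k1. if idx (mk k) k1 = j \<and> \<not> Dres k k1 then ennreal (jb (\<tau> - real_of_int (psiI k k1)) powr (1 - 4 * b)) else 0) \<le> ennreal (Lm c g p (mk k))"
      unfolding p_def by (rule HL_bound[OF cnt c1 g0' b])
    have Lmn: "\<And>m. Lm c g p m \<ge> 0" unfolding Lm_def using p by simp
    have HW: "\<And>k. w k \<le> (2 ^ mk k / 2) powr (2 * s)"
      unfolding w_def using mk_lower s0 by (intro powr_mono2') auto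
    have HS: "csum (\<lambda>m::nat. ennreal ((2 ^ m / 2) powr (2 * s) * Lm c g p m)) \<le> ennreal CR"
      unfolding CR_def by (rule HS_bound[OF c1 g0' p(1) p(2) qR])
    have "L2Hsq (- gamma / 2 - eps) (Q u v) \<le> (\<integral>\<^sup>+\<tau>. csum (\<lambda>k. ennreal (w k) * (Bil allowed b (Fd b u) (Fd b v) k \<tau>)\<^sup>2) \<partial>lborel)"
      unfolding w_def s_def by (rule L2H_bound)
    also have "\<dots> \<le> 2 * (ennreal (CJ (2 * b)) * ennreal CD * csum (fsq (Fd b u)) * csum (fsq (Fd b v))) + 2 * (ennreal (CJ (2 * b)) * csum (fsq (Fd b u)) * (16 * ennreal CR * csum (fsq (Fd b v))))"
      by (rule Main_abs[OF Fd_nonneg Fd_nonneg Fd_meas[OF u] Fd_meas[OF v] XF XG b _ HD mk_le HL Lmn HW HS])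
         (simp add: w_def)
    also have "\<dots> = ennreal C2 * csum (fsq (Fd b u)) * csum (fsq (Fd b v))"
    proof -
      have "ennreal C2 = 2 * (ennreal (CJ (2 * b)) * ennreal CD) + 32 * (ennreal (CJ (2 * b)) * ennreal CR)"
      proof -
        have X0: "0 \<le> CJ (2 * b) * CD" "0 \<le> CJ (2 * b) * CR" using CJ_pos[OF a] CD0 CR0 by auto
        have "ennreal C2 = ennreal (2 * (CJ (2 * b) * CD)) + ennreal (32 * (CJ (2 * b) * CR))"
          unfolding C2_def using X0 by (subst ennreal_plus[symmetric]) (auto simp: mult.assoc)
        also have "ennreal (2 * (CJ (2 * b) * CD)) = 2 * (ennreal (CJ (2 * b)) * ennreal CD)"
          using X0 CJ_pos[OF a] CD0 by (simp add: ennreal_mult)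
        also have "ennreal (32 * (CJ (2 * b) * CR)) = 32 * (ennreal (CJ (2 * b)) * ennreal CR)"
          using X0 CJ_pos[OF a] CR0 by (simp add: ennreal_mult)
        finally show ?thesis .
      qed
      thus ?thesis by (simp add: algebra_simps)
    qed
    also have "\<dots> = ennreal ((sqrt C2)\<^sup>2) * Xsq 0 b u * Xsq 0 b v"
      using C20 Xsq_eq[OF u] Xsq_eq[OF v] by simp
    finally show "L2Hsq (- gamma / 2 - eps) (Q u v) \<le> ennreal ((sqrt C2)\<^sup>2) * Xsq 0 b u * Xsq 0 b v" .
  qed
qed

end
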